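(* Let $V$ be a $6$-dimensional real vector space with an $\mathrm{SU}(3)$-structure $(\omega,\psi^+)$ inducing the complex structure $J$ and metric $g$. Let $A$ be a $g$-symmetric endomorphism of $V$ with $AJ=JA$ and $\mathrm{tr}(A)=0$, and let $S$ be a $g$-symmetric endomorphism of $V$ with $SJ=-JS$. Set $\sigma=g(AJ\cdot,\cdot)\in\Lambda^2V^*$ and $\rho=S_*\psi^+:=-\psi^+(S\cdot,\cdot,\cdot)-\psi^+(\cdot,S\cdot,\cdot)-\psi^+(\cdot,\cdot,S\cdot)\in\Lambda^3V^*$. Then $A$ and $S$ commute if and only if $\sigma\wedge\rho=0$. Whenever this happens, there exists a unitary basis of $V$ (i.e. $g$-orthonormal basis $(e_1,\dots,e_6)$ with $Je_{2k-1}=e_{2k}$, $k=1,2,3$) consisting of common eigenvectors of $A$ and $S$.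
   Context: An $\mathrm{SU}(3)$-structure on a $6$-dimensional vector space $V$ is a pair $(\omega,\psi^+)$, $\omega$ a nondegenerate $2$-form and $\psi^+$ a definite $3$-form (i.e. $\iota_v\psi^+$ has rank $4$ for $v\ne0$; with the orientation $\omega^3$ it determines a complex structure $J$ by Hitchin's construction), such that $\psi^+\wedge\omega=0$, $g=\omega(\cdot,J\cdot)$ is positive definite and $\psi^+\wedge J\psi^+=\frac23\omega^3$. Equivalently, there is a $g$-orthonormal basis with dual basis $(e^i)$ such that $\omega=e^{12}+e^{34}+e^{56}$, $\psi^+=e^{135}-e^{146}-e^{236}-e^{245}$ and $Je_{2k-1}=e_{2k}$. *)

theory Defs
  imports "HOL-Analysis.Analysis"
begin

definition e2 :: "('v \<Rightarrow> nat \<Rightarrow> real) \<Rightarrow> nat \<Rightarrow> nat \<Rightarrow> 'v \<Rightarrow> 'v \<Rightarrow> real" where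
  "e2 c i j x y = c x i * c y j - c x j * c y i"

definition e3 :: "('v \<Rightarrow> nat \<Rightarrow> real) \<Rightarrow> nat \<Rightarrow> nat \<Rightarrow> nat \<Rightarrow> 'v \<Rightarrow> 'v \<Rightarrow> 'v \<Rightarrow> real" where
  "e3 c i j k x y z =
     c x i * c y j * c z k - c x i * c y k * c z j - c x j * c y i * c z k
   + c x j * c y k * c z i + c x k * c y i * c z j - c x k * c y j * c z i"

text \<open>(e, c) is a basis e_1..e_6 of V with dual basis c(-) i = e^i, and the data
  (omega, psi, J, g) are in the standard SU(3) normal form with respect to it:
  g orthonormal, omega = e^12+e^34+e^56, psi+ = e^135-e^146-e^236-e^245,
  J e_{2k-1} = e_{2k} (J linear, J^2 = -1).\<close>

definition su3_frame ::
  "('v::real_vector \<Rightarrow> 'v \<Rightarrow> real) \<Rightarrow> ('v \<Rightarrow> 'v \<Rightarrow> 'v \<Rightarrow> real) \<Rightarrow> ('v \<Rightarrow> 'v)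
   \<Rightarrow> ('v \<Rightarrow> 'v \<Rightarrow> real) \<Rightarrow> (nat \<Rightarrow> 'v) \<Rightarrow> ('v \<Rightarrow> nat \<Rightarrow> real) \<Rightarrow> bool" where
  "su3_frame \<omega> \<psi> J g e c \<longleftrightarrow>
     (\<forall>i. linear (\<lambda>x. c x i)) \<and>
     (\<forall>x. x = (\<Sum>i=1..6. c x i *\<^sub>R e i)) \<and>
     (\<forall>i\<in>{1..6}. \<forall>j\<in>{1..6}. c (e i) j = (if i = j then 1 else 0)) \<and>
     (\<forall>x y. g x y = (\<Sum>i=1..6. c x i * c y i)) \<and>
     (\<forall>x y. \<omega> x y = e2 c 1 2 x y + e2 c 3 4 x y + e2 c 5 6 x y) \<and>
     (\<forall>x y z. \<psi> x y z = e3 c 1 3 5 x y z - e3 c 1 4 6 x y z - e3 c 2 3 6 x y z - e3 c 2 4 5 x y z) \<and>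
     linear J \<and>
     (\<forall>k\<in>{1,2,3}. J (e (2*k - 1)) = e (2*k) \<and> J (e (2*k)) = - e (2*k - 1))"

definition trace_in :: "(nat \<Rightarrow> 'v) \<Rightarrow> ('v \<Rightarrow> nat \<Rightarrow> real) \<Rightarrow> ('v \<Rightarrow> 'v) \<Rightarrow> real" where
  "trace_in e c A = (\<Sum>i=1..6. c (A (e i)) i)"

definition wedge23 :: "('v \<Rightarrow> 'v \<Rightarrow> real) \<Rightarrow> ('v \<Rightarrow> 'v \<Rightarrow> 'v \<Rightarrow> real) \<Rightarrow> (nat \<Rightarrow> 'v) \<Rightarrow> real" where
  "wedge23 \<sigma> \<rho> vs = (\<Sum>p | p permutes {0..<5}.
      of_int (sign p) * \<sigma> (vs (p 0)) (vs (p 1)) * \<rho> (vs (p 2)) (vs (p 3)) (vs (p 4))) / 12"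

definition g_symmetric :: "('v \<Rightarrow> 'v \<Rightarrow> real) \<Rightarrow> ('v \<Rightarrow> 'v) \<Rightarrow> bool" where
  "g_symmetric g A \<longleftrightarrow> (\<forall>x y. g (A x) y = g x (A y))"

end

theory Submission
  imports Defs
begin


lemma wedge_perm:
  assumes tau: "\<tau> permutes {0..<5::nat}"
  shows "wedge23 \<sigma> \<rho> (vs \<circ> \<tau>) = of_int (sign \<tau>) * wedge23 \<sigma> \<rho> vs"
proof -
  let ?G = "\<lambda>q. \<sigma> (vs (q 0)) (vs (q 1)) * \<rho> (vs (q 2)) (vs (q 3)) (vs (q (4::nat))) :: real"
  have pt: "permutation \<tau>" using tau permutes_imp_permutation by blast
  have "(\<Sum>p | p permutes {0..<5}. of_int (sign p) * ?G p) =
        (\<Sum>p | p permutes {0..<5}. of_int (sign (\<tau> \<circ> p)) * ?G (\<tau> \<circ> p))"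
    using setum_permutations_compose_left[OF tau, of "\<lambda>p. of_int (sign p) * ?G p"] by (simp add: o_def)
  also have "\<dots> = (\<Sum>p | p permutes {0..<5}. of_int (sign \<tau>) * (of_int (sign p) * ?G (\<tau> \<circ> p)))"
  proof (rule sum.cong[OF refl])
    fix p assume "p \<in> {p. p permutes {0..<5::nat}}"
    then have "permutation p" using permutes_imp_permutation by blast
    then show "of_int (sign (\<tau> \<circ> p)) * ?G (\<tau> \<circ> p) = of_int (sign \<tau>) * (of_int (sign p) * ?G (\<tau> \<circ> p))"
      using pt by (simp add: sign_compose)
  qed
  finally have "(\<Sum>p | p permutes {0..<5}. of_int (sign \<tau>) * (of_int (sign p) * ?G (\<tau> \<circ> p))) = (\<Sum>p | p permutes {0..<5}. of_int (sign p) * ?G p)" ..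
  then have eq: "of_int (sign \<tau>) * (\<Sum>p | p permutes {0..<5}. (of_int (sign p) * ?G (\<tau> \<circ> p))) = (\<Sum>p | p permutes {0..<5}. of_int (sign p) * ?G p)"
    by (simp add: sum_distrib_left)
  have ss: "of_int (sign \<tau>) * of_int (sign \<tau>) = (1::real)" by (simp flip: of_int_mult)
  have "(\<Sum>p | p permutes {0..<5}. (of_int (sign p) * ?G (\<tau> \<circ> p))) = of_int (sign \<tau>) * (\<Sum>p | p permutes {0..<5}. of_int (sign p) * ?G p)"
  proof -
    let ?X = "(\<Sum>p | p permutes {0..<5}. (of_int (sign p) * ?G (\<tau> \<circ> p)))"
    have "of_int (sign \<tau>) * (\<Sum>p | p permutes {0..<5}. of_int (sign p) * ?G p) = of_int (sign \<tau>) * (of_int (sign \<tau>) * ?X)"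
      by (simp only: eq)
    also have "\<dots> = (of_int (sign \<tau>) * of_int (sign \<tau>)) * ?X" by (rule mult.assoc[symmetric])
    also have "\<dots> = ?X" by (simp only: ss mult_1)
    finally show ?thesis by simp
  qed
  then show ?thesis unfolding wedge23_def by (simp add: o_def mult.assoc)
qed

lemma wedge_local:
  assumes "\<And>k. k < 5 \<Longrightarrow> vs k = vs' k"
  shows "wedge23 \<sigma> \<rho> vs = wedge23 \<sigma> \<rho> vs'"
  unfolding wedge23_def
proof (rule arg_cong[where f="\<lambda>x. x / 12"], rule sum.cong[OF refl])
  fix p assume "p \<in> {p. p permutes {0..<5::nat}}"
  then have "\<And>k. k < 5 \<Longrightarrow> p k < 5" using permutes_in_image by fastforce
  then show "of_int (sign p) * \<sigma> (vs (p 0)) (vs (p 1)) * \<rho> (vs (p 2)) (vs (p 3)) (vs (p 4)) =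
    of_int (sign p) * \<sigma> (vs' (p 0)) (vs' (p 1)) * \<rho> (vs' (p 2)) (vs' (p 3)) (vs' (p 4))"
    using assms by simp
qed

lemma sum_perm_sign_insert:
  assumes "finite S" "a \<notin> S"
  shows "(\<Sum>p | p permutes insert a S. of_int (sign p) * F p) =
    (\<Sum>b\<in>insert a S. (if a = b then 1 else -1) * (\<Sum>q | q permutes S. of_int (sign q) * F (Transposition.transpose a b \<circ> q)))"
proof -
  have "(\<Sum>p | p permutes insert a S. of_int (sign p) * F p) =
    (\<Sum>b\<in>insert a S. (\<Sum>q | q permutes S. of_int (sign (Transposition.transpose a b \<circ> q)) * F (Transposition.transpose a b \<circ> q)))"
    by (rule sum_over_permutations_insert[OF assms])
  also have "\<dots> = (\<Sum>b\<in>insert a S. (if a = b then 1 else -1) * (\<Sum>q | q permutes S. of_int (sign q) * F (Transposition.transpose a b \<circ> q)))"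
    unfolding sum_distrib_left
  proof (rule sum.cong[OF refl], rule sum.cong[OF refl])
    fix b q assume "q \<in> {q. q permutes S}"
    then have "permutation q" using assms(1) permutes_imp_permutation by blast
    then show "of_int (sign (Transposition.transpose a b \<circ> q)) * F (Transposition.transpose a b \<circ> q) =
         (if a = b then 1 else -1) * (of_int (sign q) * F (Transposition.transpose a b \<circ> q))"
      by (simp add: sign_compose permutation_swap_id sign_swap_id)
  qed
  finally show ?thesis .
qed

lemma sum_perm_sign_empty:
  "(\<Sum>p | p permutes {}. of_int (sign p) * F p) = (F id :: real)"
  by simp

lemma sum5: "(\<Sum>b\<in>{0,1,2,3,4::nat}. g b) = g 0 + g 1 + g 2 + g 3 + (g 4 :: real)" by simp
lemma sum4: "(\<Sum>b\<in>{1,2,3,4::nat}. g b) = g 1 + g 2 + g 3 + (g 4 :: real)" by simp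
lemma sum3: "(\<Sum>b\<in>{2,3,4::nat}. g b) = g 2 + g 3 + (g 4 :: real)" by simp
lemma sum2: "(\<Sum>b\<in>{3,4::nat}. g b) = g 3 + (g 4 :: real)" by simp
lemma sum1: "(\<Sum>b\<in>{4::nat}. g b) = (g 4 :: real)" by simp

lemma wedge10:
  fixes \<sigma> :: "'v \<Rightarrow> 'v \<Rightarrow> real" and \<rho> :: "'v \<Rightarrow> 'v \<Rightarrow> 'v \<Rightarrow> real"
  assumes s1: "\<And>x y. \<sigma> x y = - \<sigma> y x"
    and r1: "\<And>x y z. \<rho> x y z = - \<rho> y x z" and r2: "\<And>x y z. \<rho> x y z = - \<rho> x z y"
  shows "wedge23 \<sigma> \<rho> vs = \<sigma> (vs 0) (vs 1) * \<rho> (vs 2) (vs 3) (vs 4) - \<sigma> (vs 0) (vs 2) * \<rho> (vs 1) (vs 3) (vs 4) + \<sigma> (vs 0) (vs 3) * \<rho> (vs 1) (vs 2) (vs 4) - \<sigma> (vs 0) (vs 4) * \<rho> (vs 1) (vs 2) (vs 3) + \<sigma> (vs 1) (vs 2) * \<rho> (vs 0) (vs 3) (vs 4) - \<sigma> (vs 1) (vs 3) * \<rho> (vs 0) (vs 2) (vs 4) + \<sigma> (vs 1) (vs 4) * \<rho> (vs 0) (vs 2) (vs 3) + \<sigma> (vs 2) (vs 3) * \<rho> (vs 0) (vs 1) (vs 4) - \<sigma> (vs 2) (vs 4) * \<rho> (vs 0) (vs 1) (vs 3) + \<sigma> (vs 3) (vs 4) * \<rho> (vs 0) (vs 1) (vs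 2)"
proof -
  have r3: "\<And>x y z. \<rho> x y z = - \<rho> z y x" by (metis r1 r2 minus_minus)
  have I: "\<sigma> (vs 1) (vs 0) = - \<sigma> (vs 0) (vs 1)" "\<sigma> (vs 2) (vs 0) = - \<sigma> (vs 0) (vs 2)" "\<sigma> (vs 2) (vs 1) = - \<sigma> (vs 1) (vs 2)" "\<sigma> (vs 3) (vs 0) = - \<sigma> (vs 0) (vs 3)" "\<sigma> (vs 3) (vs 1) = - \<sigma> (vs 1) (vs 3)" "\<sigma> (vs 3) (vs 2) = - \<sigma> (vs 2) (vs 3)" "\<sigma> (vs 4) (vs 0) = - \<sigma> (vs 0) (vs 4)" "\<sigma> (vs 4) (vs 1) = - \<sigma> (vs 1) (vs 4)" "\<sigma> (vs 4) (vs 2) = - \<sigma> (vs 2) (vs 4)" "\<sigma> (vs 4) (vs 3) = - \<sigma> (vs 3) (vs 4)" "\<rho> (vs 0) (vs 2) (vs 1) = - \<rho> (vs 0) (vs 1) (vs 2)" "\<rho> (vs 0) (vs 3) (vs 1) = - \<rho> (vs 0) (vs 1) (vs 3)" "\<rho> (vs 0) (vs 3) (vs 2) = - \<rho> (vs 0) (vs 2) (vs 3)" "\<rho> (vs 0) (vs 4) (vs 1) = - \<rho> (vs 0) (vs 1) (vs 4)" "\<rho> (vs 0) (vs 4) (vs 2) = - \<rho> (vs 0) (vs 2) (vs 4)" "\<rho> (vs 0) (vs 4) (vs 3) = - \<rho> (vs 0) (vs 3) (vs 4)" "\<rho> (vs 1) (vs 0) (vs 2) = - \<rho> (vs 0)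 (vs 1) (vs 2)" "\<rho> (vs 1) (vs 0) (vs 3) = - \<rho> (vs 0) (vs 1) (vs 3)" "\<rho> (vs 1) (vs 0) (vs 4) = - \<rho> (vs 0) (vs 1) (vs 4)" "\<rho> (vs 1) (vs 2) (vs 0) = \<rho> (vs 0) (vs 1) (vs 2)" "\<rho> (vs 1) (vs 3) (vs 0) = \<rho> (vs 0) (vs 1) (vs 3)" "\<rho> (vs 1) (vs 3) (vs 2) = - \<rho> (vs 1) (vs 2) (vs 3)" "\<rho> (vs 1) (vs 4) (vs 0) = \<rho> (vs 0) (vs 1) (vs 4)" "\<rho> (vs 1) (vs 4) (vs 2) = - \<rho> (vs 1) (vs 2) (vs 4)" "\<rho> (vs 1) (vs 4) (vs 3) = - \<rho> (vs 1) (vs 3) (vs 4)" "\<rho> (vs 2) (vs 0) (vs 1) = \<rho> (vs 0) (vs 1) (vs 2)" "\<rho> (vs 2) (vs 0) (vs 3) = - \<rho> (vs 0) (vs 2) (vs 3)" "\<rho> (vs 2) (vs 0) (vs 4) = - \<rho> (vs 0) (vs 2) (vs 4)" "\<rho> (vs 2) (vs 1) (vs 0) = - \<rho> (vs 0) (vs 1) (vs 2)" "\<rho> (vs 2) (vs 1) (vs 3) = - \<rho> (vs 1) (vs 2) (vs 3)" "\<rho> (vs 2) (vs 1) (vs 4) = - \<rho> (vs 1) (vs 2) (vs 4)" "\<rho> (vs 2) (vs 3) (vs 0) = \<rho> (vs 0) (vs 2) (vs 3)" "\<rho> (vs 2) (vs 3) (vs 1) = \<rho> (vs 1) (vs 2)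 (vs 3)" "\<rho> (vs 2) (vs 4) (vs 0) = \<rho> (vs 0) (vs 2) (vs 4)" "\<rho> (vs 2) (vs 4) (vs 1) = \<rho> (vs 1) (vs 2) (vs 4)" "\<rho> (vs 2) (vs 4) (vs 3) = - \<rho> (vs 2) (vs 3) (vs 4)" "\<rho> (vs 3) (vs 0) (vs 1) = \<rho> (vs 0) (vs 1) (vs 3)" "\<rho> (vs 3) (vs 0) (vs 2) = \<rho> (vs 0) (vs 2) (vs 3)" "\<rho> (vs 3) (vs 0) (vs 4) = - \<rho> (vs 0) (vs 3) (vs 4)" "\<rho> (vs 3) (vs 1) (vs 0) = - \<rho> (vs 0) (vs 1) (vs 3)" "\<rho> (vs 3) (vs 1) (vs 2) = \<rho> (vs 1) (vs 2) (vs 3)" "\<rho> (vs 3) (vs 1) (vs 4) = - \<rho> (vs 1) (vs 3) (vs 4)" "\<rho> (vs 3) (vs 2) (vs 0) = - \<rho> (vs 0) (vs 2) (vs 3)" "\<rho> (vs 3) (vs 2) (vs 1) = - \<rho> (vs 1) (vs 2) (vs 3)" "\<rho> (vs 3) (vs 2) (vs 4) = - \<rho> (vs 2) (vs 3) (vs 4)" "\<rho> (vs 3) (vs 4) (vs 0) = \<rho> (vs 0) (vs 3) (vs 4)" "\<rho> (vs 3) (vs 4) (vs 1) = \<rho> (vs 1) (vs 3) (vs 4)" "\<rho> (vs 3) (vs 4) (vs 2) = \<rho> (vs 2) (vs 3) (vs 4)" "\<rho> (vs 4) (vs 0) (vs 1) = \<rho> (vs 0) (vs 1) (vs 4)" "\<rho>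 (vs 4) (vs 0) (vs 2) = \<rho> (vs 0) (vs 2) (vs 4)" "\<rho> (vs 4) (vs 0) (vs 3) = \<rho> (vs 0) (vs 3) (vs 4)" "\<rho> (vs 4) (vs 1) (vs 0) = - \<rho> (vs 0) (vs 1) (vs 4)" "\<rho> (vs 4) (vs 1) (vs 2) = \<rho> (vs 1) (vs 2) (vs 4)" "\<rho> (vs 4) (vs 1) (vs 3) = \<rho> (vs 1) (vs 3) (vs 4)" "\<rho> (vs 4) (vs 2) (vs 0) = - \<rho> (vs 0) (vs 2) (vs 4)" "\<rho> (vs 4) (vs 2) (vs 1) = - \<rho> (vs 1) (vs 2) (vs 4)" "\<rho> (vs 4) (vs 2) (vs 3) = \<rho> (vs 2) (vs 3) (vs 4)" "\<rho> (vs 4) (vs 3) (vs 0) = - \<rho> (vs 0) (vs 3) (vs 4)" "\<rho> (vs 4) (vs 3) (vs 1) = - \<rho> (vs 1) (vs 3) (vs 4)" "\<rho> (vs 4) (vs 3) (vs 2) = - \<rho> (vs 2) (vs 3) (vs 4)"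
    by (metis s1 r1 r2 r3 minus_minus)+
  have S: "{0..<5::nat} = {0,1,2,3,4}" by auto
  have f4: "finite {1,2,3,4::nat}" "finite {2,3,4::nat}" "finite {3,4::nat}" "finite {4::nat}" "finite ({}::nat set)" by auto
  have n: "(0::nat) \<notin> {1,2,3,4}" "(1::nat) \<notin> {2,3,4}" "(2::nat) \<notin> {3,4}" "(3::nat) \<notin> {4}" "(4::nat) \<notin> {}" by auto
  have "wedge23 \<sigma> \<rho> vs = (\<Sum>p | p permutes {0,1,2,3,4::nat}. of_int (sign p) * (\<sigma> (vs (p 0)) (vs (p 1)) * \<rho> (vs (p 2)) (vs (p 3)) (vs (p 4)))) / 12"
    unfolding wedge23_def S by (simp add: mult.assoc)
  also have "\<dots> = \<sigma> (vs 0) (vs 1) * \<rho> (vs 2) (vs 3) (vs 4) - \<sigma> (vs 0) (vs 2) * \<rho> (vs 1) (vs 3) (vs 4) + \<sigma> (vs 0) (vs 3) * \<rho> (vs 1) (vs 2) (vs 4) - \<sigma> (vs 0) (vs 4) * \<rho> (vs 1) (vs 2) (vs 3) + \<sigma> (vs 1) (vs 2) * \<rho> (vs 0) (vs 3) (vs 4) - \<sigma> (vs 1) (vs 3) * \<rho> (vs 0) (vs 2) (vs 4) + \<sigma> (vs 1) (vs 4) * \<rho> (vs 0) (vs 2) (vs 3) + \<sigma> (vs 2) (vs 3) * \<rho> (vs 0) (vs 1) (vs 4) - \<sigma> (vs 2) (vs 4) * \<rho> (vs 0) (vs 1) (vs 3) + \<sigma> (vs 3) (vs 4) * \<rho> (vs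 0) (vs 1) (vs 2)"
  apply (subst sum_perm_sign_insert[OF f4(1) n(1)])
  apply (subst sum_perm_sign_insert[OF f4(2) n(2)])
  apply (subst sum_perm_sign_insert[OF f4(3) n(3)])
  apply (subst sum_perm_sign_insert[OF f4(4) n(4)])
  apply (subst sum_perm_sign_insert[OF f4(5) n(5)])
  apply (subst sum_perm_sign_empty)
  apply (simp only: sum5 sum4 sum3 sum2 sum1)
  apply (simp only: Transposition.transpose_def o_def id_def)
  apply simp
  apply (simp only: One_nat_def[symmetric])
  apply (simp only: I)
  apply algebra
  done
  finally show ?thesis .
qed


lemma lin_mult_c1: "linear f \<Longrightarrow> linear (\<lambda>x. (f x :: real) * c)"
  unfolding linear_iff by (simp add: algebra_simps)
lemma lin_mult_c2: "linear f \<Longrightarrow> linear (\<lambda>x. c * (f x :: real))"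
  unfolding linear_iff by (simp add: algebra_simps)

lemma wedge_slot_lin:
  fixes \<sigma> :: "'v::real_vector \<Rightarrow> 'v \<Rightarrow> real" and \<rho> :: "'v \<Rightarrow> 'v \<Rightarrow> 'v \<Rightarrow> real"
  assumes s1: "\<And>y. linear (\<lambda>x. \<sigma> x y)" and s2: "\<And>x. linear (\<lambda>y. \<sigma> x y)"
    and r1: "\<And>y z. linear (\<lambda>x. \<rho> x y z)" and r2: "\<And>x z. linear (\<lambda>y. \<rho> x y z)"
    and r3: "\<And>x y. linear (\<lambda>z. \<rho> x y z)" and k: "k < 5"
  shows "linear (\<lambda>x. wedge23 \<sigma> \<rho> (vs(k := x)))"
proof -
  have term_lin: "linear (\<lambda>x. \<sigma> ((vs(k:=x)) (p 0)) ((vs(k:=x)) (p 1)) * \<rho> ((vs(k:=x)) (p 2)) ((vs(k:=x)) (p 3)) ((vs(k:=x)) (p 4)))"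
    if p: "p permutes {0..<5::nat}" for p
  proof -
    have "k \<in> p ` {0..<5}" using permutes_image[OF p] k by auto
    then obtain j where j: "j < 5" "k = p j" by auto
    have inj: "inj p" using permutes_inj[OF p] .
    have "j = 0 \<or> j = 1 \<or> j = 2 \<or> j = 3 \<or> j = 4" using j by auto
    then show ?thesis
    proof (elim disjE)
      assume "j = 0"
      then show ?thesis using j by (simp add: inj_eq[OF inj] lin_mult_c1 s1)
    next
      assume "j = 1"
      then show ?thesis using j by (simp add: inj_eq[OF inj] lin_mult_c1 s2)
    next
      assume "j = 2"
      then show ?thesis using j by (simp add: inj_eq[OF inj] lin_mult_c2 r1)
    next
      assume "j = 3"
      then show ?thesis using j by (simp add: inj_eq[OF inj] lin_mult_c2 r2)
    next
      assume "j = 4"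
      then show ?thesis using j by (simp add: inj_eq[OF inj] lin_mult_c2 r3)
    qed
  qed
  have "linear (\<lambda>x. (\<Sum>p | p permutes {0..<5::nat}. of_int (sign p) * (\<sigma> ((vs(k:=x)) (p 0)) ((vs(k:=x)) (p 1)) * \<rho> ((vs(k:=x)) (p 2)) ((vs(k:=x)) (p 3)) ((vs(k:=x)) (p 4)))))"
    apply (rule linear_compose_sum)
    apply (intro ballI lin_mult_c2)
    apply (rule term_lin)
    apply simp
    done
  then have "linear (\<lambda>x. (\<Sum>p | p permutes {0..<5::nat}. of_int (sign p) * (\<sigma> ((vs(k:=x)) (p 0)) ((vs(k:=x)) (p 1)) * \<rho> ((vs(k:=x)) (p 2)) ((vs(k:=x)) (p 3)) ((vs(k:=x)) (p 4)))) * (1/12))"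
    by (rule lin_mult_c1)
  then show ?thesis unfolding wedge23_def by (simp add: mult.assoc)
qed

lemma multilin_reduce:
  fixes W :: "(nat \<Rightarrow> 'v::real_vector) \<Rightarrow> real" and e :: "nat \<Rightarrow> 'v" and c :: "'v \<Rightarrow> nat \<Rightarrow> real"
  assumes lin: "\<And>vs k. k < 5 \<Longrightarrow> linear (\<lambda>x. W (vs(k := x)))"
    and loc: "\<And>vs vs'. (\<And>k. k < 5 \<Longrightarrow> vs k = vs' k) \<Longrightarrow> W vs = W vs'"
    and span: "\<And>x. x = (\<Sum>i=1..6. c x i *\<^sub>R e i)"
    and base: "\<And>idx. (\<And>k. k < 5 \<Longrightarrow> idx k \<in> {1..6}) \<Longrightarrow> W (e \<circ> idx) = 0"
  shows "W vs = 0"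
proof -
  have P: "\<forall>vs::nat \<Rightarrow> 'v. (\<forall>k. n \<le> k \<and> k < 5 \<longrightarrow> vs k \<in> e ` {1..6}) \<longrightarrow> W vs = 0" for n
  proof (induction n)
    case 0
    show ?case
    proof (intro allI impI)
      fix vs :: "nat \<Rightarrow> 'v" assume h: "\<forall>k::nat. 0 \<le> k \<and> k < 5 \<longrightarrow> vs k \<in> e ` {1..6}"
      define idx where "idx k = (SOME i. i \<in> {1..6} \<and> vs k = e i)" for k
      have idx: "idx k \<in> {1..6} \<and> vs k = e (idx k)" if "k < 5" for k
      proof -
        from h that obtain i where "i \<in> {1..6}" "vs k = e i" by auto
        then show ?thesis unfolding idx_def by (rule someI[of "\<lambda>i. i \<in> {1..6} \<and> vs k = e i", OF conjI])
      qed
      have "W vs = W (e \<circ> idx)" by (rule loc) (simp add: idx)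
      also have "\<dots> = 0" by (rule base) (use idx in blast)
      finally show "W vs = 0" .
    qed
  next
    case (Suc n)
    show ?case
    proof (intro allI impI)
      fix vs :: "nat \<Rightarrow> 'v" assume h: "\<forall>k::nat. Suc n \<le> k \<and> k < 5 \<longrightarrow> vs k \<in> e ` {1..6}"
      show "W vs = 0"
      proof (cases "n < 5")
        case False
        then have "\<forall>k. n \<le> k \<and> k < 5 \<longrightarrow> vs k \<in> e ` {1..6}" by auto
        then show ?thesis using Suc.IH by blast
      next
        case True
        have z: "W (vs(n := e i)) = 0" if "i \<in> {1..6}" for i
          using Suc.IH h that by auto
        have "W vs = W (vs(n := (\<Sum>i=1..6. c (vs n) i *\<^sub>R e i)))"
          using span[of "vs n"] by simp
        also have "\<dots> = (\<Sum>i=1..6. c (vs n) i * W (vs(n := e i)))"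
          using linear_sum[OF lin[OF True, of vs], of "\<lambda>i. c (vs n) i *\<^sub>R e i" "{1..6}"] linear_cmul[OF lin[OF True, of vs]] by simp
        also have "\<dots> = 0" using z by simp
        finally show ?thesis .
      qed
    qed
  qed
  show ?thesis using P[of 5] by force
qed


definition st :: "nat \<Rightarrow> nat \<Rightarrow> nat" where "st t k = (if k + 1 < t then k + 1 else k + 2)"

lemma basis_reduce:
  fixes W :: "(nat \<Rightarrow> 'v) \<Rightarrow> real" and e :: "nat \<Rightarrow> 'v"
  assumes alt: "\<And>\<tau> vs. \<tau> permutes {0..<5} \<Longrightarrow> W (vs \<circ> \<tau>) = of_int (sign \<tau>) * W vs"
    and loc: "\<And>vs vs'. (\<And>k. k < 5 \<Longrightarrow> vs k = vs' k) \<Longrightarrow> W vs = W vs'"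
    and base6: "\<And>t. t \<in> {1..6} \<Longrightarrow> W (e \<circ> st t) = 0"
    and idx: "\<And>k. k < 5 \<Longrightarrow> idx k \<in> {1..6}"
  shows "W (e \<circ> idx) = 0"
proof (cases "\<exists>a b. a < 5 \<and> b < 5 \<and> a \<noteq> b \<and> idx a = idx b")
  case True
  then obtain a b where ab: "a < 5" "b < 5" "a \<noteq> b" "idx a = idx b" by blast
  have tp: "Transposition.transpose a b permutes {0..<5}" using ab by (intro permutes_swap_id) auto
  have "(e \<circ> idx) \<circ> Transposition.transpose a b = e \<circ> idx"
    using ab by (auto simp: fun_eq_iff Transposition.transpose_def)
  then have "W (e \<circ> idx) = of_int (sign (Transposition.transpose a b)) * W (e \<circ> idx)"
    using alt[OF tp, of "e \<circ> idx"] by simp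
  then have "W (e \<circ> idx) = - W (e \<circ> idx)" using ab by (simp add: sign_swap_id)
  then show ?thesis by simp
next
  case False
  then have inj: "inj_on idx {0..<5}" unfolding inj_on_def by (metis atLeastLessThan_iff)
  have cimg: "card (idx ` {0..<5}) = 5" using card_image[OF inj] by simp
  have sub: "idx ` {0..<5} \<subseteq> {1..6}" using idx by auto
  have "\<exists>t\<in>{1..6}. t \<notin> idx ` {0..<5}"
  proof (rule ccontr)
    assume "\<not> ?thesis"
    then have "{1..6} \<subseteq> idx ` {0..<5}" by auto
    then have "card {1..6::nat} \<le> card (idx ` {0..<5})" by (intro card_mono) auto
    then show False using cimg by simp
  qed
  then obtain t where t: "t \<in> {1..6}" "t \<notin> idx ` {0..<5}" by blast
  define \<tau> where "\<tau> k = (if k < 5 then (if idx k < t then idx k - 1 else idx k - 2) else k)" for k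
  have ne: "idx k \<noteq> t" if "k < 5" for k using t that by auto
  have st_tau: "st t (\<tau> k) = idx k" if k: "k < 5" for k
    using idx[OF k] ne[OF k] t(1) k unfolding st_def \<tau>_def by auto
  have tau_lt: "\<tau> k < 5" if k: "k < 5" for k
    using idx[OF k] ne[OF k] t(1) k unfolding \<tau>_def by auto
  have injt: "inj_on \<tau> {0..<5}"
  proof (rule inj_onI)
    fix x y assume "x \<in> {0..<5}" "y \<in> {0..<5}" "\<tau> x = \<tau> y"
    then have "idx x = idx y" using st_tau by (metis atLeastLessThan_iff)
    then show "x = y" using inj \<open>x \<in> {0..<5}\<close> \<open>y \<in> {0..<5}\<close> by (auto dest: inj_onD)
  qed
  have img: "\<tau> ` {0..<5} = {0..<5}"
    by (rule endo_inj_surj) (use tau_lt injt in auto)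
  have tp: "\<tau> permutes {0..<5}"
  proof (rule bij_imp_permutes)
    show "bij_betw \<tau> {0..<5} {0..<5}" by (simp add: bij_betw_def injt img)
    show "\<tau> x = x" if "x \<notin> {0..<5}" for x using that by (simp add: \<tau>_def)
  qed
  have "W (e \<circ> idx) = W ((e \<circ> st t) \<circ> \<tau>)" by (rule loc) (simp add: st_tau)
  also have "\<dots> = of_int (sign \<tau>) * W (e \<circ> st t)" by (rule alt[OF tp])
  also have "\<dots> = 0" using base6[OF t(1)] by simp
  finally show ?thesis .
qed


lemma quad_zero:
  fixes b q :: real
  assumes q: "q \<ge> 0" and h: "\<And>t. 0 \<le> 2*t*b + t^2*q"
  shows "b = 0"
proof -
  define t where "t = - b / (q + 1)"
  have q1: "q + 1 > 0" using q by simp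
  have tq: "t*(q+1) = -b" using q1 by (simp add: t_def)
  have "(q+1)^2 * (2*t*b + t^2*q) = 2*b*(q+1)*(t*(q+1)) + q*((t*(q+1))*(t*(q+1)))"
    by (simp add: power2_eq_square algebra_simps)
  also have "\<dots> = - ((b*b) * (q + 2))" unfolding tq by (simp add: algebra_simps)
  finally have "(q+1)^2 * (2*t*b + t^2*q) = - ((b*b) * (q + 2))" .
  moreover have "(q+1)^2 * (2*t*b + t^2*q) \<ge> 0" using h[of t] by simp
  ultimately have "(b*b) * (q + 2) \<le> 0" by simp
  moreover have "q + 2 > 0" using q by simp
  ultimately have "b*b \<le> 0" by (simp add: mult_le_0_iff)
  moreover have "b*b \<ge> 0" by simp
  ultimately have "b*b = 0" by linarith
  then show ?thesis by simp
qed

lemma sa_eigen: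
  fixes T :: "'a::euclidean_space \<Rightarrow> 'a"
  assumes lin: "linear T" and sa: "\<And>x y. inner (T x) y = inner x (T y)"
    and W: "subspace W" and inv: "\<And>x. x \<in> W \<Longrightarrow> T x \<in> W"
    and x0: "x0 \<in> W" "x0 \<noteq> 0"
  shows "\<exists>v\<in>W. norm v = 1 \<and> (\<exists>a. T v = a *\<^sub>R v)"
proof -
  let ?K = "sphere 0 1 \<inter> W"
  have cK: "compact ?K" by (rule compact_Int_closed[OF compact_sphere closed_subspace[OF W]])
  have "x0 /\<^sub>R norm x0 \<in> ?K" using x0 W by (simp add: subspace_scale)
  then have neK: "?K \<noteq> {}" by blast
  have contT: "continuous_on ?K T"
    using lin by (simp add: linear_continuous_on linear_conv_bounded_linear)
  have "continuous_on ?K (\<lambda>x. inner x (T x))"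
    by (rule continuous_on_inner[OF continuous_on_id contT])
  then obtain v where v: "v \<in> ?K" and vmax: "\<And>y. y \<in> ?K \<Longrightarrow> inner y (T y) \<le> inner v (T v)"
    using continuous_attains_sup[OF cK neK] by blast
  define l where "l = inner v (T v)"
  have vW: "v \<in> W" and nv: "norm v = 1" using v by auto
  have vv: "inner v v = 1" using nv by (simp add: dot_square_norm)
  have bound: "inner w (T w) \<le> l * inner w w" if w: "w \<in> W" for w
  proof (cases "w = 0")
    case True then show ?thesis using linear_0[OF lin] by simp
  next
    case False
    let ?u = "w /\<^sub>R norm w"
    have "?u \<in> ?K" using w False W by (simp add: subspace_scale)
    then have "inner ?u (T ?u) \<le> l" using vmax l_def by blast
    moreover have "inner ?u (T ?u) = inner w (T w) / (norm w)^2"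
      using linear_cmul[OF lin] False by (simp add: power2_eq_square field_simps)
    ultimately have "inner w (T w) / (norm w)^2 \<le> l" by simp
    moreover have "(norm w)^2 > 0" using False by simp
    ultimately have "inner w (T w) \<le> l * (norm w)^2" by (simp add: divide_le_eq)
    then show ?thesis by (simp add: dot_square_norm)
  qed
  define d where "d = l *\<^sub>R v - T v"
  have dW: "d \<in> W" unfolding d_def using vW inv W by (simp add: subspace_diff subspace_scale)
  have Qd: "0 \<le> l * inner d d - inner d (T d)" using bound[OF dW] by simp
  have "0 \<le> 2*t*(inner d d) + t^2 * (l * inner d d - inner d (T d))" for t
  proof -
    have mem: "v + t *\<^sub>R d \<in> W" using vW dW W by (simp add: subspace_add subspace_scale)
    have "0 \<le> l * inner (v + t *\<^sub>R d) (v + t *\<^sub>R d) - inner (v + t *\<^sub>R d) (T (v + t *\<^sub>R d))"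
      using bound[OF mem] by simp
    also have "\<dots> = 2*t*(inner d d) + t^2 * (l * inner d d - inner d (T d))"
    proof -
      have Tvd: "inner v (T d) = inner (T v) d" using sa by simp
      have dd: "inner d d = l * inner v d - inner (T v) d" unfolding d_def
        by (simp add: inner_diff_left inner_diff_right inner_commute algebra_simps)
      show ?thesis
        using vv Tvd dd unfolding l_def
        by (simp add: linear_add[OF lin] linear_cmul[OF lin] inner_add_left inner_add_right
              inner_commute[of d v] inner_commute[of "T v" d] power2_eq_square algebra_simps)
          algebra
    qed
    finally show ?thesis .
  qed
  then have "inner d d = 0" using quad_zero[OF Qd] by blast
  then have "T v = l *\<^sub>R v" unfolding d_def by simp
  then show ?thesis using vW nv by blast
qed


lemma ball6: "(\<forall>i\<in>{1..6::nat}. P i) \<longleftrightarrow> P 1 \<and> P 2 \<and> P 3 \<and> P 4 \<and> P 5 \<and> P 6"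
proof -
  have "{1..6::nat} = {1,2,3,4,5,6}" by auto
  then show ?thesis by simp
qed

lemma eq_from_diff: "a - b = (0::real) \<Longrightarrow> a = b" by simp

lemma common_eig:
  fixes T1 T2 :: "'a::euclidean_space \<Rightarrow> 'a"
  assumes lin1: "linear T1" and sa1: "\<And>x y. inner (T1 x) y = inner x (T1 y)"
    and lin2: "linear T2" and sa2: "\<And>x y. inner (T2 x) y = inner x (T2 y)"
    and comm: "\<And>x. T1 (T2 x) = T2 (T1 x)"
    and W: "subspace W" and inv1: "\<And>x. x \<in> W \<Longrightarrow> T1 x \<in> W" and inv2: "\<And>x. x \<in> W \<Longrightarrow> T2 x \<in> W"
    and x0: "x0 \<in> W" "x0 \<noteq> 0"
  shows "\<exists>v\<in>W. norm v = 1 \<and> (\<exists>a. T1 v = a *\<^sub>R v) \<and> (\<exists>b. T2 v = b *\<^sub>R v)"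
proof -
  obtain u a where u: "u \<in> W" "norm u = 1" "T1 u = a *\<^sub>R u"
    using sa_eigen[OF lin1 sa1 W inv1 x0] by blast
  let ?E = "{x \<in> W. T1 x = a *\<^sub>R x}"
  have E: "subspace ?E"
    unfolding subspace_def using W
    by (auto simp: subspace_0 subspace_add subspace_scale linear_0[OF lin1] linear_add[OF lin1] linear_cmul[OF lin1] scaleR_add_right)
  have invE: "T2 x \<in> ?E" if "x \<in> ?E" for x
    using that inv2 comm linear_cmul[OF lin2] by auto
  have "u \<in> ?E" "u \<noteq> 0" using u by auto
  then obtain v b where v: "v \<in> ?E" "norm v = 1" "T2 v = b *\<^sub>R v"
    using sa_eigen[OF lin2 sa2 E invE] by blast
  then show ?thesis by blast
qed

context
  fixes A S J :: "'a::euclidean_space \<Rightarrow> 'a"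
  assumes A_lin: "linear A" and S_lin: "linear S" and J_lin: "linear J"
    and A_sa: "\<And>x y. inner (A x) y = inner x (A y)"
    and S_sa: "\<And>x y. inner (S x) y = inner x (S y)"
    and J_sk: "\<And>x y. inner (J x) y = - inner x (J y)"
    and JJ: "\<And>x. J (J x) = - x"
    and AJ: "\<And>x. A (J x) = J (A x)"
    and SJ: "\<And>x. S (J x) = - J (S x)"
    and AS: "\<And>x. A (S x) = S (A x)"
begin

lemma J_iso: "inner (J x) (J y) = inner x y"
  using J_sk[of x "J y"] JJ[of y] by simp

lemma J_orth: "inner x (J x) = 0"
  using J_sk[of x x] by (simp add: inner_commute)

lemma J_eig:
  assumes "A v = a *\<^sub>R v" "S v = b *\<^sub>R v"
  shows "A (J v) = a *\<^sub>R J v" "S (J v) = (- b) *\<^sub>R J v"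
  using assms AJ SJ linear_cmul[OF J_lin] by auto

definition perp :: "'a set \<Rightarrow> 'a set" where
  "perp F = {x. \<forall>u\<in>F. inner x u = 0 \<and> inner x (J u) = 0}"

lemma perp_sub: "subspace (perp F)"
  unfolding subspace_def perp_def by (auto simp: inner_add_left)

lemma perp_inv:
  assumes F: "\<And>u. u \<in> F \<Longrightarrow> (\<exists>a. A u = a *\<^sub>R u) \<and> (\<exists>b. S u = b *\<^sub>R u)"
    and x: "x \<in> perp F"
  shows "A x \<in> perp F" "S x \<in> perp F" "J x \<in> perp F"
proof -
  have h: "inner x u = 0" "inner x (J u) = 0" if "u \<in> F" for u using x that unfolding perp_def by auto
  show "A x \<in> perp F" unfolding perp_def
  proof (intro CollectI ballI conjI)
    fix u assume u: "u \<in> F"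
    then obtain a where a: "A u = a *\<^sub>R u" using F by blast
    have Ju: "A (J u) = a *\<^sub>R J u" using a AJ linear_cmul[OF J_lin] by simp
    show "inner (A x) u = 0" using h[OF u] a by (simp add: A_sa)
    show "inner (A x) (J u) = 0" using h[OF u] Ju by (simp add: A_sa)
  qed
  show "S x \<in> perp F" unfolding perp_def
  proof (intro CollectI ballI conjI)
    fix u assume u: "u \<in> F"
    then obtain b where b: "S u = b *\<^sub>R u" using F by blast
    have Ju: "S (J u) = (- b) *\<^sub>R J u" using b SJ linear_cmul[OF J_lin] by simp
    show "inner (S x) u = 0" using h[OF u] b by (simp add: S_sa)
    show "inner (S x) (J u) = 0" using h[OF u] Ju by (simp add: S_sa)
  qed
  show "J x \<in> perp F" unfolding perp_def
  proof (intro CollectI ballI conjI)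
    fix u assume u: "u \<in> F"
    show "inner (J x) u = 0" using h[OF u] by (simp add: J_sk)
    show "inner (J x) (J u) = 0" using h[OF u] by (simp add: J_iso)
  qed
qed

lemma perp_nonzero:
  assumes fin: "finite F" and card: "2 * card F < DIM('a)"
  shows "\<exists>x. x \<in> perp F \<and> x \<noteq> 0"
proof -
  let ?G = "F \<union> J ` F"
  have "dim ?G \<le> card ?G" by (rule dim_le_card') (use fin in auto)
  also have "\<dots> \<le> card F + card (J ` F)" by (rule card_Un_le)
  also have "\<dots> \<le> 2 * card F" using card_image_le[OF fin, of J] by simp
  finally have dl: "dim ?G < DIM('a)" using card by simp
  obtain x where x: "x \<noteq> 0" "\<And>y. y \<in> span ?G \<Longrightarrow> orthogonal x y"
    using orthogonal_to_subspace_exists[OF dl] by blast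
  have "x \<in> perp F" unfolding perp_def
    using x(2) span_base[of _ ?G] by (auto simp: orthogonal_def)
  then show ?thesis using x(1) by blast
qed

lemma pair_step:
  assumes W: "subspace W" and inv: "\<And>x. x \<in> W \<Longrightarrow> A x \<in> W \<and> S x \<in> W \<and> J x \<in> W"
    and x0: "x0 \<in> W" "x0 \<noteq> 0"
  shows "\<exists>v\<in>W. norm v = 1 \<and> (\<exists>a. A v = a *\<^sub>R v) \<and> (\<exists>b. S v = b *\<^sub>R v)"
  using common_eig[OF A_lin A_sa S_lin S_sa AS W _ _ x0] inv by blast

lemma inner_zero_sym: "inner a b = 0 \<Longrightarrow> inner b a = 0" by (simp add: inner_commute)

lemma unitary_eig:
  assumes dim6: "DIM('a) = 6"
  shows "\<exists>w::nat \<Rightarrow> 'a. (\<forall>i\<in>{1..6}. \<forall>j\<in>{1..6}. inner (w i) (w j) = (if i = j then 1 else 0)) \<and>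
      (\<forall>k\<in>{1,2,3}. J (w (2*k - 1)) = w (2*k)) \<and>
      (\<forall>i\<in>{1..6}. \<exists>a b. A (w i) = a *\<^sub>R w i \<and> S (w i) = b *\<^sub>R w i)"
proof -
  have step: "\<exists>v\<in>perp F. norm v = 1 \<and> (\<exists>a. A v = a *\<^sub>R v) \<and> (\<exists>b. S v = b *\<^sub>R v)"
    if F: "\<And>u. u \<in> F \<Longrightarrow> (\<exists>a. A u = a *\<^sub>R u) \<and> (\<exists>b. S u = b *\<^sub>R u)" and fin: "finite F" and cF: "card F \<le> 2" for F
  proof -
    obtain x0 where "x0 \<in> perp F" "x0 \<noteq> 0" using perp_nonzero[OF fin] cF dim6 by force
    then show ?thesis using pair_step[OF perp_sub _ _ ] perp_inv[OF F] by blast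
  qed
  obtain v1 where v1: "v1 \<in> perp {}" "norm v1 = 1" "\<exists>a. A v1 = a *\<^sub>R v1" "\<exists>b. S v1 = b *\<^sub>R v1"
    using step[of "{}"] by auto
  obtain v2 where v2: "v2 \<in> perp {v1}" "norm v2 = 1" "\<exists>a. A v2 = a *\<^sub>R v2" "\<exists>b. S v2 = b *\<^sub>R v2"
    using step[of "{v1}"] v1 by auto
  have F12: "(\<exists>a. A u = a *\<^sub>R u) \<and> (\<exists>b. S u = b *\<^sub>R u)" if "u \<in> {v1, v2}" for u
    using that v1 v2 by auto
  obtain v3 where v3: "v3 \<in> perp {v1, v2}" "norm v3 = 1" "\<exists>a. A v3 = a *\<^sub>R v3" "\<exists>b. S v3 = b *\<^sub>R v3"
  proof -
    have "card {v1, v2} \<le> 2" by (cases "v1 = v2") auto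
    then show thesis using step[of "{v1, v2}", OF F12] that by auto
  qed
  have Jv2: "J v2 \<in> perp {v1}" by (rule perp_inv(3)[OF _ v2(1)]) (use v1 in auto)
  have Jv3: "J v3 \<in> perp {v1, v2}" by (rule perp_inv(3)[OF F12 v3(1)])
  have o1: "inner v2 v1 = 0" "inner v2 (J v1) = 0" "inner (J v2) v1 = 0" "inner (J v2) (J v1) = 0"
    using v2(1) Jv2 unfolding perp_def by auto
  have o2: "inner v3 v1 = 0" "inner v3 (J v1) = 0" "inner v3 v2 = 0" "inner v3 (J v2) = 0"
    "inner (J v3) v1 = 0" "inner (J v3) (J v1) = 0" "inner (J v3) v2 = 0" "inner (J v3) (J v2) = 0"
    using v3(1) Jv3 unfolding perp_def by auto
  have o3: "inner v1 (J v1) = 0" "inner v2 (J v2) = 0" "inner v3 (J v3) = 0" by (simp_all add: J_orth)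
  note ortho = o1 o2 o3 o1[THEN inner_zero_sym] o2[THEN inner_zero_sym] o3[THEN inner_zero_sym]
  have n1: "inner v1 v1 = 1" "inner v2 v2 = 1" "inner v3 v3 = 1"
    using v1(2) v2(2) v3(2) by (simp_all add: dot_square_norm)
  have n2: "inner (J v1) (J v1) = 1" "inner (J v2) (J v2) = 1" "inner (J v3) (J v3) = 1"
    using n1 by (simp_all add: J_iso)
  define w where "w i = (if i = 1 then v1 else if i = 2 then J v1 else if i = 3 then v2 else if i = 4 then J v2
      else if i = 5 then v3 else J v3)" for i :: nat
  have eigv: "\<exists>a b. A v = a *\<^sub>R v \<and> S v = b *\<^sub>R v" "\<exists>a b. A (J v) = a *\<^sub>R J v \<and> S (J v) = b *\<^sub>R J v"
    if "\<exists>a. A v = a *\<^sub>R v" "\<exists>b. S v = b *\<^sub>R v" for v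
    using that J_eig by blast+
  show ?thesis
  proof (intro exI conjI)
    show "\<forall>i\<in>{1..6}. \<forall>j\<in>{1..6}. inner (w i) (w j) = (if i = j then 1 else 0)"
      unfolding ball6 w_def by (simp add: ortho n1 n2)
    show "\<forall>k\<in>{1,2,3}. J (w (2*k - 1)) = w (2*k)"
      unfolding w_def by simp
    show "\<forall>i\<in>{1..6}. \<exists>a b. A (w i) = a *\<^sub>R w i \<and> S (w i) = b *\<^sub>R w i"
      unfolding ball6 w_def using eigv[OF v1(3,4)] eigv[OF v2(3,4)] eigv[OF v3(3,4)] by simp
  qed
qed

end


definition tv :: "('v \<Rightarrow> nat \<Rightarrow> real) \<Rightarrow> 'v \<Rightarrow> real \<times> real \<times> real \<times> real \<times> real \<times> real" where
  "tv c x = (c x 1, c x 2, c x 3, c x 4, c x 5, c x 6)"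

definition uv :: "(nat \<Rightarrow> 'v::real_vector) \<Rightarrow> real \<times> real \<times> real \<times> real \<times> real \<times> real \<Rightarrow> 'v" where
  "uv e y = fst y *\<^sub>R e 1 + fst (snd y) *\<^sub>R e 2 + fst (snd (snd y)) *\<^sub>R e 3 + fst (snd (snd (snd y))) *\<^sub>R e 4
     + fst (snd (snd (snd (snd y)))) *\<^sub>R e 5 + snd (snd (snd (snd (snd y)))) *\<^sub>R e 6"


lemma sum6: "(\<Sum>i=1..6. f i) = f 1 + f 2 + f 3 + f 4 + f 5 + (f (6::nat) :: 'a::comm_monoid_add)"
proof -
  have "{1..6::nat} = {1,2,3,4,5,6}" by auto
  then show ?thesis by (simp add: add.assoc)
qed

lemma sum6': "(\<Sum>i=Suc 0..6. f i) = f 1 + f 2 + f 3 + f 4 + f 5 + (f (6::nat) :: 'a::comm_monoid_add)"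
  using sum6[of f] by simp

lemma st_vals: "st 1 0 = 2" "st 1 1 = 3" "st 1 2 = 4" "st 1 3 = 5" "st 1 4 = 6" "st 2 0 = 1" "st 2 1 = 3" "st 2 2 = 4" "st 2 3 = 5" "st 2 4 = 6" "st 3 0 = 1" "st 3 1 = 2" "st 3 2 = 4" "st 3 3 = 5" "st 3 4 = 6" "st 4 0 = 1" "st 4 1 = 2" "st 4 2 = 3" "st 4 3 = 5" "st 4 4 = 6" "st 5 0 = 1" "st 5 1 = 2" "st 5 2 = 3" "st 5 3 = 4" "st 5 4 = 6" "st 6 0 = 1" "st 6 1 = 2" "st 6 2 = 3" "st 6 3 = 4" "st 6 4 = 5"
  by (simp_all add: st_def)

declare One_nat_def [simp del]

context
  fixes \<omega> g :: "'v::real_vector \<Rightarrow> 'v \<Rightarrow> real"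
    and \<psi> :: "'v \<Rightarrow> 'v \<Rightarrow> 'v \<Rightarrow> real"
    and J :: "'v \<Rightarrow> 'v"
    and e :: "nat \<Rightarrow> 'v" and c :: "'v \<Rightarrow> nat \<Rightarrow> real"
  assumes su3: "su3_frame \<omega> \<psi> J g e c"
begin

lemma c_lin: "linear (\<lambda>x. c x i)" using su3 unfolding su3_frame_def by blast
lemma span6: "x = (\<Sum>i=1..6. c x i *\<^sub>R e i)" using su3 unfolding su3_frame_def by blast
lemma delta: "i \<in> {1..6} \<Longrightarrow> j \<in> {1..6} \<Longrightarrow> c (e i) j = (if i = j then 1 else 0)"
  using su3 unfolding su3_frame_def by blast
lemma g_def6: "g x y = (\<Sum>i=1..6. c x i * c y i)" using su3 unfolding su3_frame_def by blast
lemma psi_def6: "\<psi> x y z = e3 c 1 3 5 x y z - e3 c 1 4 6 x y z - e3 c 2 3 6 x y z - e3 c 2 4 5 x y z"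
  using su3 unfolding su3_frame_def by blast
lemma J_lin: "linear J" using su3 unfolding su3_frame_def by blast
lemma J_e: "J (e 1) = e 2" "J (e 2) = - e 1" "J (e 3) = e 4" "J (e 4) = - e 3" "J (e 5) = e 6" "J (e 6) = - e 5"
proof -
  have h: "\<forall>k\<in>{1,2,3}. J (e (2*k - 1)) = e (2*k) \<and> J (e (2*k)) = - e (2*k - 1)"
    using su3 unfolding su3_frame_def by blast
  from h[rule_format, of 1] h[rule_format, of 2] h[rule_format, of 3]
  show "J (e 1) = e 2" "J (e 2) = - e 1" "J (e 3) = e 4" "J (e 4) = - e 3" "J (e 5) = e 6" "J (e 6) = - e 5"
    by (simp_all add: One_nat_def[symmetric])
qed

lemma c_add: "c (x + y) i = c x i + c y i" using linear_add[OF c_lin] by simp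
lemma c_scale: "c (r *\<^sub>R x) i = r * c x i" using linear_cmul[OF c_lin] by simp
lemma c_neg: "c (- x) i = - c x i" using linear_neg[OF c_lin] by simp
lemma c_diff: "c (x - y) i = c x i - c y i" using linear_diff[OF c_lin] by simp

lemma delta_num:
  "c (e 1) 1 = 1" "c (e 1) 2 = 0" "c (e 1) 3 = 0" "c (e 1) 4 = 0" "c (e 1) 5 = 0" "c (e 1) 6 = 0"
  "c (e 2) 1 = 0" "c (e 2) 2 = 1" "c (e 2) 3 = 0" "c (e 2) 4 = 0" "c (e 2) 5 = 0" "c (e 2) 6 = 0"
  "c (e 3) 1 = 0" "c (e 3) 2 = 0" "c (e 3) 3 = 1" "c (e 3) 4 = 0" "c (e 3) 5 = 0" "c (e 3) 6 = 0"
  "c (e 4) 1 = 0" "c (e 4) 2 = 0" "c (e 4) 3 = 0" "c (e 4) 4 = 1" "c (e 4) 5 = 0" "c (e 4) 6 = 0"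
  "c (e 5) 1 = 0" "c (e 5) 2 = 0" "c (e 5) 3 = 0" "c (e 5) 4 = 0" "c (e 5) 5 = 1" "c (e 5) 6 = 0"
  "c (e 6) 1 = 0" "c (e 6) 2 = 0" "c (e 6) 3 = 0" "c (e 6) 4 = 0" "c (e 6) 5 = 0" "c (e 6) 6 = 1"
  by (simp_all add: delta)

lemma coordT: "linear T \<Longrightarrow> c (T x) i = (\<Sum>k=1..6. c x k * c (T (e k)) i)"
proof -
  assume T: "linear T"
  have "T x = T (\<Sum>k=1..6. c x k *\<^sub>R e k)" using span6[of x] by simp
  also have "\<dots> = (\<Sum>k=1..6. c x k *\<^sub>R T (e k))" by (simp add: linear_sum[OF T] linear_cmul[OF T])
  finally have "c (T x) i = c (\<Sum>k=1..6. c x k *\<^sub>R T (e k)) i" by simp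
  also have "\<dots> = (\<Sum>k=1..6. c x k * c (T (e k)) i)"
    using linear_sum[OF c_lin, of "\<lambda>k. c x k *\<^sub>R T (e k)" "{1..6}" i] by (simp add: c_scale)
  finally show ?thesis .
qed

lemma cJ: "c (J y) 1 = - c y 2" "c (J y) 2 = c y 1" "c (J y) 3 = - c y 4" "c (J y) 4 = c y 3"
  "c (J y) 5 = - c y 6" "c (J y) 6 = c y 5"
  by (simp_all add: coordT[OF J_lin, of y] sum6 J_e c_neg delta_num)

lemma g_e: "g x (e b) = c x b" if "b \<in> {1..6}"
proof -
  have "b = 1 \<or> b = 2 \<or> b = 3 \<or> b = 4 \<or> b = 5 \<or> b = 6" using that by auto
  then show ?thesis by (auto simp: g_def6 sum6 sum6' delta_num)
qed

lemma g_sym: "g x y = g y x" by (simp add: g_def6 mult.commute)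

lemma J_skew: "g (J x) y = - g x (J y)"
  by (simp add: g_def6 sum6 cJ algebra_simps)

lemma JJ: "J (J x) = - x"
proof -
  have "J (J x) = (\<Sum>i=1..6. c (J (J x)) i *\<^sub>R e i)" by (rule span6)
  also have "\<dots> = (\<Sum>i=1..6. (- c x i) *\<^sub>R e i)" by (simp add: sum6 sum6' cJ)
  also have "\<dots> = - (\<Sum>i=1..6. c x i *\<^sub>R e i)" by (simp add: sum_negf)
  also have "\<dots> = - x" using span6[of x] by simp
  finally show ?thesis .
qed

lemma e3_alt: "e3 c i j k x y z = - e3 c i j k y x z" "e3 c i j k x y z = - e3 c i j k x z y"
  by (simp_all add: e3_def algebra_simps)

lemma psi_alt1: "\<psi> x y z = - \<psi> y x z"
  by (simp only: psi_def6 e3_alt(1)[of _ _ _ x y z]; simp?)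
lemma psi_alt2: "\<psi> x y z = - \<psi> x z y"
  by (simp only: psi_def6 e3_alt(2)[of _ _ _ x y z]; simp?)
lemmas psi_alt = psi_alt1 psi_alt2

lemma psi_lin: "linear (\<lambda>x. \<psi> x y z)" "linear (\<lambda>y. \<psi> x y z)" "linear (\<lambda>z. \<psi> x y z)"
  by (simp_all add: linear_iff psi_def6 e3_def c_add c_scale algebra_simps)

lemma g_lin: "linear (\<lambda>x. g x y)" "linear (\<lambda>y. g x y)"
  by (simp_all add: linear_iff g_def6 sum6 sum6' c_add c_scale algebra_simps)



lemma tv_uv: "tv c (uv e y) = y"
  by (cases y rule: prod_cases6) (simp add: tv_def uv_def c_add c_scale delta_num)

lemma uv_tv: "uv e (tv c x) = x"
proof -
  have "uv e (tv c x) = (\<Sum>i=1..6. c x i *\<^sub>R e i)" by (simp add: uv_def tv_def sum6 add.assoc)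
  also have "\<dots> = x" by (rule span6[symmetric])
  finally show ?thesis .
qed

lemma g_tv: "g x y = inner (tv c x) (tv c y)"
  by (simp add: g_def6 sum6 tv_def inner_Pair add.assoc)

lemma tv_lin: "linear (tv c)"
  unfolding linear_iff by (simp add: tv_def c_add c_scale)

lemma uv_lin: "linear (uv e)"
  unfolding linear_iff by (simp add: uv_def algebra_simps scaleR_add_left)

context
  fixes A S :: "'v \<Rightarrow> 'v" and \<sigma> :: "'v \<Rightarrow> 'v \<Rightarrow> real" and \<rho> :: "'v \<Rightarrow> 'v \<Rightarrow> 'v \<Rightarrow> real"
  assumes A_lin: "linear A" and A_sym: "g_symmetric g A"
    and AJ: "A \<circ> J = J \<circ> A"
    and S_lin: "linear S" and S_sym: "g_symmetric g S"
    and SJ: "S \<circ> J = - (J \<circ> S)"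
    and sig_def: "\<sigma> = (\<lambda>x y. g (A (J x)) y)"
    and rho_def: "\<rho> = (\<lambda>x y z. - \<psi> (S x) y z - \<psi> x (S y) z - \<psi> x y (S z))"
begin

lemma AJx: "A (J x) = J (A x)" using AJ by (metis comp_apply)
lemma SJx: "S (J x) = - J (S x)" using SJ by (metis comp_apply fun_Compl_def)

lemma symA: assumes i: "i \<in> {1..6}" and j: "j \<in> {1..6}" shows "c (A (e j)) i = c (A (e i)) j"
proof -
  have 1: "g (A (e j)) (e i) = g (e j) (A (e i))" using A_sym unfolding g_symmetric_def by blast
  have 2: "g (e j) (A (e i)) = g (A (e i)) (e j)" by (rule g_sym)
  show ?thesis using 1 2 g_e[OF i] g_e[OF j] by simp
qed
lemma symS: assumes i: "i \<in> {1..6}" and j: "j \<in> {1..6}" shows "c (S (e j)) i = c (S (e i)) j"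
proof -
  have 1: "g (S (e j)) (e i) = g (e j) (S (e i))" using S_sym unfolding g_symmetric_def by blast
  have 2: "g (e j) (S (e i)) = g (S (e i)) (e j)" by (rule g_sym)
  show ?thesis using 1 2 g_e[OF i] g_e[OF j] by simp
qed
lemma rawAc: "c (A (J (e j))) i = c (J (A (e j))) i" by (simp add: AJx)
lemma rawSc: "c (S (J (e j))) i = - c (J (S (e j))) i" by (simp add: SJx c_neg)

lemma sig_e: "b \<in> {1..6} \<Longrightarrow> \<sigma> x (e b) = c (A (J x)) b"
  by (simp add: sig_def g_e)

lemma sig_anti: "\<sigma> x y = - \<sigma> y x"
proof -
  have "g (A (J x)) y = g (J (A x)) y" by (simp add: AJx)
  also have "\<dots> = - g (A x) (J y)" by (rule J_skew)
  also have "\<dots> = - g x (A (J y))" using A_sym unfolding g_symmetric_def by simp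
  also have "\<dots> = - g (A (J y)) x" by (simp add: g_sym)
  finally show ?thesis by (simp add: sig_def)
qed

lemma rho_alt1: "\<rho> x y z = - \<rho> y x z"
  unfolding rho_def by (simp add: psi_alt1[of "S x" y z] psi_alt1[of x "S y" z] psi_alt1[of x y "S z"])
lemma rho_alt2: "\<rho> x y z = - \<rho> x z y"
  unfolding rho_def by (simp add: psi_alt2[of "S x" y z] psi_alt2[of x "S y" z] psi_alt2[of x y "S z"])

lemma rho_e: "\<rho> x y z = - \<psi> (S x) y z - \<psi> x (S y) z - \<psi> x y (S z)"
  by (simp add: rho_def)

lemma key_identities:
  shows "(\<forall>t\<in>{1..6}. wedge23 \<sigma> \<rho> (e \<circ> st t) = 0) \<longleftrightarrow>
    (\<forall>i\<in>{1..6}. \<forall>j\<in>{1..6}. c (A (S (e j))) i = c (S (A (e j))) i)"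
proof -
  have raw0: "c (A (e 2)) 1 = c (A (e 1)) 2" by (rule symA) simp_all
  have raw1: "c (S (e 2)) 1 = c (S (e 1)) 2" by (rule symS) simp_all
  have raw2: "c (A (e 3)) 1 = c (A (e 1)) 3" by (rule symA) simp_all
  have raw3: "c (S (e 3)) 1 = c (S (e 1)) 3" by (rule symS) simp_all
  have raw4: "c (A (e 4)) 1 = c (A (e 1)) 4" by (rule symA) simp_all
  have raw5: "c (S (e 4)) 1 = c (S (e 1)) 4" by (rule symS) simp_all
  have raw6: "c (A (e 5)) 1 = c (A (e 1)) 5" by (rule symA) simp_all
  have raw7: "c (S (e 5)) 1 = c (S (e 1)) 5" by (rule symS) simp_all
  have raw8: "c (A (e 6)) 1 = c (A (e 1)) 6" by (rule symA) simp_all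
  have raw9: "c (S (e 6)) 1 = c (S (e 1)) 6" by (rule symS) simp_all
  have raw10: "c (A (e 3)) 2 = c (A (e 2)) 3" by (rule symA) simp_all
  have raw11: "c (S (e 3)) 2 = c (S (e 2)) 3" by (rule symS) simp_all
  have raw12: "c (A (e 4)) 2 = c (A (e 2)) 4" by (rule symA) simp_all
  have raw13: "c (S (e 4)) 2 = c (S (e 2)) 4" by (rule symS) simp_all
  have raw14: "c (A (e 5)) 2 = c (A (e 2)) 5" by (rule symA) simp_all
  have raw15: "c (S (e 5)) 2 = c (S (e 2)) 5" by (rule symS) simp_all
  have raw16: "c (A (e 6)) 2 = c (A (e 2)) 6" by (rule symA) simp_all
  have raw17: "c (S (e 6)) 2 = c (S (e 2)) 6" by (rule symS) simp_all
  have raw18: "c (A (e 4)) 3 = c (A (e 3)) 4" by (rule symA) simp_all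
  have raw19: "c (S (e 4)) 3 = c (S (e 3)) 4" by (rule symS) simp_all
  have raw20: "c (A (e 5)) 3 = c (A (e 3)) 5" by (rule symA) simp_all
  have raw21: "c (S (e 5)) 3 = c (S (e 3)) 5" by (rule symS) simp_all
  have raw22: "c (A (e 6)) 3 = c (A (e 3)) 6" by (rule symA) simp_all
  have raw23: "c (S (e 6)) 3 = c (S (e 3)) 6" by (rule symS) simp_all
  have raw24: "c (A (e 5)) 4 = c (A (e 4)) 5" by (rule symA) simp_all
  have raw25: "c (S (e 5)) 4 = c (S (e 4)) 5" by (rule symS) simp_all
  have raw26: "c (A (e 6)) 4 = c (A (e 4)) 6" by (rule symA) simp_all
  have raw27: "c (S (e 6)) 4 = c (S (e 4)) 6" by (rule symS) simp_all
  have raw28: "c (A (e 6)) 5 = c (A (e 5)) 6" by (rule symA) simp_all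
  have raw29: "c (S (e 6)) 5 = c (S (e 5)) 6" by (rule symS) simp_all
  have raw30: "c (A (e 2)) 1 = - c (A (e 1)) 2" using rawAc[of 1 1] by (simp add: J_e linear_neg[OF A_lin] c_neg cJ)
  have raw31: "c (S (e 2)) 1 = c (S (e 1)) 2" using rawSc[of 1 1] by (simp add: J_e linear_neg[OF S_lin] c_neg cJ)
  have raw32: "c (A (e 2)) 2 = c (A (e 1)) 1" using rawAc[of 1 2] by (simp add: J_e linear_neg[OF A_lin] c_neg cJ)
  have raw33: "c (S (e 2)) 2 = - c (S (e 1)) 1" using rawSc[of 1 2] by (simp add: J_e linear_neg[OF S_lin] c_neg cJ)
  have raw34: "c (A (e 2)) 3 = - c (A (e 1)) 4" using rawAc[of 1 3] by (simp add: J_e linear_neg[OF A_lin] c_neg cJ)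
  have raw35: "c (S (e 2)) 3 = c (S (e 1)) 4" using rawSc[of 1 3] by (simp add: J_e linear_neg[OF S_lin] c_neg cJ)
  have raw36: "c (A (e 2)) 4 = c (A (e 1)) 3" using rawAc[of 1 4] by (simp add: J_e linear_neg[OF A_lin] c_neg cJ)
  have raw37: "c (S (e 2)) 4 = - c (S (e 1)) 3" using rawSc[of 1 4] by (simp add: J_e linear_neg[OF S_lin] c_neg cJ)
  have raw38: "c (A (e 2)) 5 = - c (A (e 1)) 6" using rawAc[of 1 5] by (simp add: J_e linear_neg[OF A_lin] c_neg cJ)
  have raw39: "c (S (e 2)) 5 = c (S (e 1)) 6" using rawSc[of 1 5] by (simp add: J_e linear_neg[OF S_lin] c_neg cJ)
  have raw40: "c (A (e 2)) 6 = c (A (e 1)) 5" using rawAc[of 1 6] by (simp add: J_e linear_neg[OF A_lin] c_neg cJ)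
  have raw41: "c (S (e 2)) 6 = - c (S (e 1)) 5" using rawSc[of 1 6] by (simp add: J_e linear_neg[OF S_lin] c_neg cJ)
  have raw42: "- c (A (e 1)) 1 = - c (A (e 2)) 2" using rawAc[of 2 1] by (simp add: J_e linear_neg[OF A_lin] c_neg cJ)
  have raw43: "- c (S (e 1)) 1 = c (S (e 2)) 2" using rawSc[of 2 1] by (simp add: J_e linear_neg[OF S_lin] c_neg cJ)
  have raw44: "- c (A (e 1)) 2 = c (A (e 2)) 1" using rawAc[of 2 2] by (simp add: J_e linear_neg[OF A_lin] c_neg cJ)
  have raw45: "- c (S (e 1)) 2 = - c (S (e 2)) 1" using rawSc[of 2 2] by (simp add: J_e linear_neg[OF S_lin] c_neg cJ)
  have raw46: "- c (A (e 1)) 3 = - c (A (e 2)) 4" using rawAc[of 2 3] by (simp add: J_e linear_neg[OF A_lin] c_neg cJ)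
  have raw47: "- c (S (e 1)) 3 = c (S (e 2)) 4" using rawSc[of 2 3] by (simp add: J_e linear_neg[OF S_lin] c_neg cJ)
  have raw48: "- c (A (e 1)) 4 = c (A (e 2)) 3" using rawAc[of 2 4] by (simp add: J_e linear_neg[OF A_lin] c_neg cJ)
  have raw49: "- c (S (e 1)) 4 = - c (S (e 2)) 3" using rawSc[of 2 4] by (simp add: J_e linear_neg[OF S_lin] c_neg cJ)
  have raw50: "- c (A (e 1)) 5 = - c (A (e 2)) 6" using rawAc[of 2 5] by (simp add: J_e linear_neg[OF A_lin] c_neg cJ)
  have raw51: "- c (S (e 1)) 5 = c (S (e 2)) 6" using rawSc[of 2 5] by (simp add: J_e linear_neg[OF S_lin] c_neg cJ)
  have raw52: "- c (A (e 1)) 6 = c (A (e 2)) 5" using rawAc[of 2 6] by (simp add: J_e linear_neg[OF A_lin] c_neg cJ)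
  have raw53: "- c (S (e 1)) 6 = - c (S (e 2)) 5" using rawSc[of 2 6] by (simp add: J_e linear_neg[OF S_lin] c_neg cJ)
  have raw54: "c (A (e 4)) 1 = - c (A (e 3)) 2" using rawAc[of 3 1] by (simp add: J_e linear_neg[OF A_lin] c_neg cJ)
  have raw55: "c (S (e 4)) 1 = c (S (e 3)) 2" using rawSc[of 3 1] by (simp add: J_e linear_neg[OF S_lin] c_neg cJ)
  have raw56: "c (A (e 4)) 2 = c (A (e 3)) 1" using rawAc[of 3 2] by (simp add: J_e linear_neg[OF A_lin] c_neg cJ)
  have raw57: "c (S (e 4)) 2 = - c (S (e 3)) 1" using rawSc[of 3 2] by (simp add: J_e linear_neg[OF S_lin] c_neg cJ)
  have raw58: "c (A (e 4)) 3 = - c (A (e 3)) 4" using rawAc[of 3 3] by (simp add: J_e linear_neg[OF A_lin] c_neg cJ)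
  have raw59: "c (S (e 4)) 3 = c (S (e 3)) 4" using rawSc[of 3 3] by (simp add: J_e linear_neg[OF S_lin] c_neg cJ)
  have raw60: "c (A (e 4)) 4 = c (A (e 3)) 3" using rawAc[of 3 4] by (simp add: J_e linear_neg[OF A_lin] c_neg cJ)
  have raw61: "c (S (e 4)) 4 = - c (S (e 3)) 3" using rawSc[of 3 4] by (simp add: J_e linear_neg[OF S_lin] c_neg cJ)
  have raw62: "c (A (e 4)) 5 = - c (A (e 3)) 6" using rawAc[of 3 5] by (simp add: J_e linear_neg[OF A_lin] c_neg cJ)
  have raw63: "c (S (e 4)) 5 = c (S (e 3)) 6" using rawSc[of 3 5] by (simp add: J_e linear_neg[OF S_lin] c_neg cJ)
  have raw64: "c (A (e 4)) 6 = c (A (e 3)) 5" using rawAc[of 3 6] by (simp add: J_e linear_neg[OF A_lin] c_neg cJ)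
  have raw65: "c (S (e 4)) 6 = - c (S (e 3)) 5" using rawSc[of 3 6] by (simp add: J_e linear_neg[OF S_lin] c_neg cJ)
  have raw66: "- c (A (e 3)) 1 = - c (A (e 4)) 2" using rawAc[of 4 1] by (simp add: J_e linear_neg[OF A_lin] c_neg cJ)
  have raw67: "- c (S (e 3)) 1 = c (S (e 4)) 2" using rawSc[of 4 1] by (simp add: J_e linear_neg[OF S_lin] c_neg cJ)
  have raw68: "- c (A (e 3)) 2 = c (A (e 4)) 1" using rawAc[of 4 2] by (simp add: J_e linear_neg[OF A_lin] c_neg cJ)
  have raw69: "- c (S (e 3)) 2 = - c (S (e 4)) 1" using rawSc[of 4 2] by (simp add: J_e linear_neg[OF S_lin] c_neg cJ)
  have raw70: "- c (A (e 3)) 3 = - c (A (e 4)) 4" using rawAc[of 4 3] by (simp add: J_e linear_neg[OF A_lin] c_neg cJ)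
  have raw71: "- c (S (e 3)) 3 = c (S (e 4)) 4" using rawSc[of 4 3] by (simp add: J_e linear_neg[OF S_lin] c_neg cJ)
  have raw72: "- c (A (e 3)) 4 = c (A (e 4)) 3" using rawAc[of 4 4] by (simp add: J_e linear_neg[OF A_lin] c_neg cJ)
  have raw73: "- c (S (e 3)) 4 = - c (S (e 4)) 3" using rawSc[of 4 4] by (simp add: J_e linear_neg[OF S_lin] c_neg cJ)
  have raw74: "- c (A (e 3)) 5 = - c (A (e 4)) 6" using rawAc[of 4 5] by (simp add: J_e linear_neg[OF A_lin] c_neg cJ)
  have raw75: "- c (S (e 3)) 5 = c (S (e 4)) 6" using rawSc[of 4 5] by (simp add: J_e linear_neg[OF S_lin] c_neg cJ)
  have raw76: "- c (A (e 3)) 6 = c (A (e 4)) 5" using rawAc[of 4 6] by (simp add: J_e linear_neg[OF A_lin] c_neg cJ)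
  have raw77: "- c (S (e 3)) 6 = - c (S (e 4)) 5" using rawSc[of 4 6] by (simp add: J_e linear_neg[OF S_lin] c_neg cJ)
  have raw78: "c (A (e 6)) 1 = - c (A (e 5)) 2" using rawAc[of 5 1] by (simp add: J_e linear_neg[OF A_lin] c_neg cJ)
  have raw79: "c (S (e 6)) 1 = c (S (e 5)) 2" using rawSc[of 5 1] by (simp add: J_e linear_neg[OF S_lin] c_neg cJ)
  have raw80: "c (A (e 6)) 2 = c (A (e 5)) 1" using rawAc[of 5 2] by (simp add: J_e linear_neg[OF A_lin] c_neg cJ)
  have raw81: "c (S (e 6)) 2 = - c (S (e 5)) 1" using rawSc[of 5 2] by (simp add: J_e linear_neg[OF S_lin] c_neg cJ)
  have raw82: "c (A (e 6)) 3 = - c (A (e 5)) 4" using rawAc[of 5 3] by (simp add: J_e linear_neg[OF A_lin] c_neg cJ)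
  have raw83: "c (S (e 6)) 3 = c (S (e 5)) 4" using rawSc[of 5 3] by (simp add: J_e linear_neg[OF S_lin] c_neg cJ)
  have raw84: "c (A (e 6)) 4 = c (A (e 5)) 3" using rawAc[of 5 4] by (simp add: J_e linear_neg[OF A_lin] c_neg cJ)
  have raw85: "c (S (e 6)) 4 = - c (S (e 5)) 3" using rawSc[of 5 4] by (simp add: J_e linear_neg[OF S_lin] c_neg cJ)
  have raw86: "c (A (e 6)) 5 = - c (A (e 5)) 6" using rawAc[of 5 5] by (simp add: J_e linear_neg[OF A_lin] c_neg cJ)
  have raw87: "c (S (e 6)) 5 = c (S (e 5)) 6" using rawSc[of 5 5] by (simp add: J_e linear_neg[OF S_lin] c_neg cJ)
  have raw88: "c (A (e 6)) 6 = c (A (e 5)) 5" using rawAc[of 5 6] by (simp add: J_e linear_neg[OF A_lin] c_neg cJ)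
  have raw89: "c (S (e 6)) 6 = - c (S (e 5)) 5" using rawSc[of 5 6] by (simp add: J_e linear_neg[OF S_lin] c_neg cJ)
  have raw90: "- c (A (e 5)) 1 = - c (A (e 6)) 2" using rawAc[of 6 1] by (simp add: J_e linear_neg[OF A_lin] c_neg cJ)
  have raw91: "- c (S (e 5)) 1 = c (S (e 6)) 2" using rawSc[of 6 1] by (simp add: J_e linear_neg[OF S_lin] c_neg cJ)
  have raw92: "- c (A (e 5)) 2 = c (A (e 6)) 1" using rawAc[of 6 2] by (simp add: J_e linear_neg[OF A_lin] c_neg cJ)
  have raw93: "- c (S (e 5)) 2 = - c (S (e 6)) 1" using rawSc[of 6 2] by (simp add: J_e linear_neg[OF S_lin] c_neg cJ)
  have raw94: "- c (A (e 5)) 3 = - c (A (e 6)) 4" using rawAc[of 6 3] by (simp add: J_e linear_neg[OF A_lin] c_neg cJ)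
  have raw95: "- c (S (e 5)) 3 = c (S (e 6)) 4" using rawSc[of 6 3] by (simp add: J_e linear_neg[OF S_lin] c_neg cJ)
  have raw96: "- c (A (e 5)) 4 = c (A (e 6)) 3" using rawAc[of 6 4] by (simp add: J_e linear_neg[OF A_lin] c_neg cJ)
  have raw97: "- c (S (e 5)) 4 = - c (S (e 6)) 3" using rawSc[of 6 4] by (simp add: J_e linear_neg[OF S_lin] c_neg cJ)
  have raw98: "- c (A (e 5)) 5 = - c (A (e 6)) 6" using rawAc[of 6 5] by (simp add: J_e linear_neg[OF A_lin] c_neg cJ)
  have raw99: "- c (S (e 5)) 5 = c (S (e 6)) 6" using rawSc[of 6 5] by (simp add: J_e linear_neg[OF S_lin] c_neg cJ)
  have raw100: "- c (A (e 5)) 6 = c (A (e 6)) 5" using rawAc[of 6 6] by (simp add: J_e linear_neg[OF A_lin] c_neg cJ)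
  have raw101: "- c (S (e 5)) 6 = - c (S (e 6)) 5" using rawSc[of 6 6] by (simp add: J_e linear_neg[OF S_lin] c_neg cJ)
  note raw = raw0 raw1 raw2 raw3 raw4 raw5 raw6 raw7 raw8 raw9 raw10 raw11 raw12 raw13 raw14 raw15 raw16 raw17 raw18 raw19 raw20 raw21 raw22 raw23 raw24 raw25 raw26 raw27 raw28 raw29 raw30 raw31 raw32 raw33 raw34 raw35 raw36 raw37 raw38 raw39 raw40 raw41 raw42 raw43 raw44 raw45 raw46 raw47 raw48 raw49 raw50 raw51 raw52 raw53 raw54 raw55 raw56 raw57 raw58 raw59 raw60 raw61 raw62 raw63 raw64 raw65 raw66 raw67 raw68 raw69 raw70 raw71 raw72 raw73 raw74 raw75 raw76 raw77 raw78 raw79 raw80 raw81 raw82 raw83 raw84 raw85 raw86 raw87 raw88 raw89 raw90 raw91 raw92 raw93 raw94 raw95 raw96 raw97 raw98 raw99 raw100 raw101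
  have rl0: "c (A (e 2)) 1 = 0" using raw by linarith
  have rl1: "c (A (e 3)) 1 = c (A (e 1)) 3" using raw by linarith
  have rl2: "c (A (e 4)) 1 = c (A (e 1)) 4" using raw by linarith
  have rl3: "c (A (e 5)) 1 = c (A (e 1)) 5" using raw by linarith
  have rl4: "c (A (e 6)) 1 = c (A (e 1)) 6" using raw by linarith
  have rl5: "c (A (e 1)) 2 = 0" using raw by linarith
  have rl6: "c (A (e 2)) 2 = c (A (e 1)) 1" using raw by linarith
  have rl7: "c (A (e 3)) 2 = - c (A (e 1)) 4" using raw by linarith
  have rl8: "c (A (e 4)) 2 = c (A (e 1)) 3" using raw by linarith
  have rl9: "c (A (e 5)) 2 = - c (A (e 1)) 6" using raw by linarith
  have rl10: "c (A (e 6)) 2 = c (A (e 1)) 5" using raw by linarith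
  have rl11: "c (A (e 2)) 3 = - c (A (e 1)) 4" using raw by linarith
  have rl12: "c (A (e 4)) 3 = 0" using raw by linarith
  have rl13: "c (A (e 5)) 3 = c (A (e 3)) 5" using raw by linarith
  have rl14: "c (A (e 6)) 3 = c (A (e 3)) 6" using raw by linarith
  have rl15: "c (A (e 2)) 4 = c (A (e 1)) 3" using raw by linarith
  have rl16: "c (A (e 3)) 4 = 0" using raw by linarith
  have rl17: "c (A (e 4)) 4 = c (A (e 3)) 3" using raw by linarith
  have rl18: "c (A (e 5)) 4 = - c (A (e 3)) 6" using raw by linarith
  have rl19: "c (A (e 6)) 4 = c (A (e 3)) 5" using raw by linarith
  have rl20: "c (A (e 2)) 5 = - c (A (e 1)) 6" using raw by linarith
  have rl21: "c (A (e 4)) 5 = - c (A (e 3)) 6" using raw by linarith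
  have rl22: "c (A (e 6)) 5 = 0" using raw by linarith
  have rl23: "c (A (e 2)) 6 = c (A (e 1)) 5" using raw by linarith
  have rl24: "c (A (e 4)) 6 = c (A (e 3)) 5" using raw by linarith
  have rl25: "c (A (e 5)) 6 = 0" using raw by linarith
  have rl26: "c (A (e 6)) 6 = c (A (e 5)) 5" using raw by linarith
  have rl27: "c (S (e 2)) 1 = c (S (e 1)) 2" using raw by linarith
  have rl28: "c (S (e 3)) 1 = c (S (e 1)) 3" using raw by linarith
  have rl29: "c (S (e 4)) 1 = c (S (e 1)) 4" using raw by linarith
  have rl30: "c (S (e 5)) 1 = c (S (e 1)) 5" using raw by linarith
  have rl31: "c (S (e 6)) 1 = c (S (e 1)) 6" using raw by linarith
  have rl32: "c (S (e 2)) 2 = - c (S (e 1)) 1" using raw by linarith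
  have rl33: "c (S (e 3)) 2 = c (S (e 1)) 4" using raw by linarith
  have rl34: "c (S (e 4)) 2 = - c (S (e 1)) 3" using raw by linarith
  have rl35: "c (S (e 5)) 2 = c (S (e 1)) 6" using raw by linarith
  have rl36: "c (S (e 6)) 2 = - c (S (e 1)) 5" using raw by linarith
  have rl37: "c (S (e 2)) 3 = c (S (e 1)) 4" using raw by linarith
  have rl38: "c (S (e 4)) 3 = c (S (e 3)) 4" using raw by linarith
  have rl39: "c (S (e 5)) 3 = c (S (e 3)) 5" using raw by linarith
  have rl40: "c (S (e 6)) 3 = c (S (e 3)) 6" using raw by linarith
  have rl41: "c (S (e 2)) 4 = - c (S (e 1)) 3" using raw by linarith
  have rl42: "c (S (e 4)) 4 = - c (S (e 3)) 3" using raw by linarith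
  have rl43: "c (S (e 5)) 4 = c (S (e 3)) 6" using raw by linarith
  have rl44: "c (S (e 6)) 4 = - c (S (e 3)) 5" using raw by linarith
  have rl45: "c (S (e 2)) 5 = c (S (e 1)) 6" using raw by linarith
  have rl46: "c (S (e 4)) 5 = c (S (e 3)) 6" using raw by linarith
  have rl47: "c (S (e 6)) 5 = c (S (e 5)) 6" using raw by linarith
  have rl48: "c (S (e 2)) 6 = - c (S (e 1)) 5" using raw by linarith
  have rl49: "c (S (e 4)) 6 = - c (S (e 3)) 5" using raw by linarith
  have rl50: "c (S (e 6)) 6 = - c (S (e 5)) 5" using raw by linarith
  note rls = rl0 rl1 rl2 rl3 rl4 rl5 rl6 rl7 rl8 rl9 rl10 rl11 rl12 rl13 rl14 rl15 rl16 rl17 rl18 rl19 rl20 rl21 rl22 rl23 rl24 rl25 rl26 rl27 rl28 rl29 rl30 rl31 rl32 rl33 rl34 rl35 rl36 rl37 rl38 rl39 rl40 rl41 rl42 rl43 rl44 rl45 rl46 rl47 rl48 rl49 rl50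
  have W1: "wedge23 \<sigma> \<rho> (e \<circ> st 1) = 2 * c (A (e 1)) 3 * c (S (e 1)) 5 + 2 * c (A (e 3)) 3 * c (S (e 3)) 5 - 2 * c (A (e 1)) 4 * c (S (e 1)) 6 - 2 * c (A (e 1)) 5 * c (S (e 1)) 3 - 2 * c (A (e 3)) 5 * c (S (e 3)) 3 + 2 * c (A (e 3)) 5 * c (S (e 5)) 5 - 2 * c (A (e 5)) 5 * c (S (e 3)) 5 + 2 * c (A (e 1)) 6 * c (S (e 1)) 4 + 2 * c (A (e 3)) 6 * c (S (e 3)) 4 + 2 * c (A (e 3)) 6 * c (S (e 5)) 6"
    by (simp add: wedge10[OF sig_anti rho_alt1 rho_alt2] st_vals sig_e rho_e psi_def6 e3_def delta_num J_e linear_neg[OF A_lin] c_neg rls) algebra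
  have W2: "wedge23 \<sigma> \<rho> (e \<circ> st 2) = 2 * c (A (e 1)) 3 * c (S (e 1)) 6 + 2 * c (A (e 3)) 3 * c (S (e 3)) 6 + 2 * c (A (e 1)) 4 * c (S (e 1)) 5 - 2 * c (A (e 1)) 5 * c (S (e 1)) 4 - 2 * c (A (e 3)) 5 * c (S (e 3)) 4 + 2 * c (A (e 3)) 5 * c (S (e 5)) 6 - 2 * c (A (e 5)) 5 * c (S (e 3)) 6 - 2 * c (A (e 1)) 6 * c (S (e 1)) 3 - 2 * c (A (e 3)) 6 * c (S (e 3)) 3 - 2 * c (A (e 3)) 6 * c (S (e 5)) 5"
    by (simp add: wedge10[OF sig_anti rho_alt1 rho_alt2] st_vals sig_e rho_e psi_def6 e3_def delta_num J_e linear_neg[OF A_lin] c_neg rls) algebra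
  have W3: "wedge23 \<sigma> \<rho> (e \<circ> st 3) = - 2 * c (A (e 1)) 1 * c (S (e 1)) 5 - 2 * c (A (e 1)) 3 * c (S (e 3)) 5 - 2 * c (A (e 1)) 4 * c (S (e 3)) 6 + 2 * c (A (e 1)) 5 * c (S (e 1)) 1 - 2 * c (A (e 1)) 5 * c (S (e 5)) 5 + 2 * c (A (e 3)) 5 * c (S (e 1)) 3 + 2 * c (A (e 5)) 5 * c (S (e 1)) 5 - 2 * c (A (e 1)) 6 * c (S (e 1)) 2 - 2 * c (A (e 1)) 6 * c (S (e 5)) 6 - 2 * c (A (e 3)) 6 * c (S (e 1)) 4"
    by (simp add: wedge10[OF sig_anti rho_alt1 rho_alt2] st_vals sig_e rho_e psi_def6 e3_def delta_num J_e linear_neg[OF A_lin] c_neg rls) algebra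
  have W4: "wedge23 \<sigma> \<rho> (e \<circ> st 4) = - 2 * c (A (e 1)) 1 * c (S (e 1)) 6 - 2 * c (A (e 1)) 3 * c (S (e 3)) 6 + 2 * c (A (e 1)) 4 * c (S (e 3)) 5 + 2 * c (A (e 1)) 5 * c (S (e 1)) 2 - 2 * c (A (e 1)) 5 * c (S (e 5)) 6 + 2 * c (A (e 3)) 5 * c (S (e 1)) 4 + 2 * c (A (e 5)) 5 * c (S (e 1)) 6 + 2 * c (A (e 1)) 6 * c (S (e 1)) 1 + 2 * c (A (e 1)) 6 * c (S (e 5)) 5 + 2 * c (A (e 3)) 6 * c (S (e 1)) 3"
    by (simp add: wedge10[OF sig_anti rho_alt1 rho_alt2] st_vals sig_e rho_e psi_def6 e3_def delta_num J_e linear_neg[OF A_lin] c_neg rls) algebra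
  have W5: "wedge23 \<sigma> \<rho> (e \<circ> st 5) = 2 * c (A (e 1)) 1 * c (S (e 1)) 3 - 2 * c (A (e 1)) 3 * c (S (e 1)) 1 + 2 * c (A (e 1)) 3 * c (S (e 3)) 3 - 2 * c (A (e 3)) 3 * c (S (e 1)) 3 + 2 * c (A (e 1)) 4 * c (S (e 1)) 2 + 2 * c (A (e 1)) 4 * c (S (e 3)) 4 + 2 * c (A (e 1)) 5 * c (S (e 3)) 5 - 2 * c (A (e 3)) 5 * c (S (e 1)) 5 + 2 * c (A (e 1)) 6 * c (S (e 3)) 6 - 2 * c (A (e 3)) 6 * c (S (e 1)) 6"
    by (simp add: wedge10[OF sig_anti rho_alt1 rho_alt2] st_vals sig_e rho_e psi_def6 e3_def delta_num J_e linear_neg[OF A_lin] c_neg rls) algebra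
  have W6: "wedge23 \<sigma> \<rho> (e \<circ> st 6) = 2 * c (A (e 1)) 1 * c (S (e 1)) 4 - 2 * c (A (e 1)) 3 * c (S (e 1)) 2 + 2 * c (A (e 1)) 3 * c (S (e 3)) 4 - 2 * c (A (e 3)) 3 * c (S (e 1)) 4 - 2 * c (A (e 1)) 4 * c (S (e 1)) 1 - 2 * c (A (e 1)) 4 * c (S (e 3)) 3 + 2 * c (A (e 1)) 5 * c (S (e 3)) 6 - 2 * c (A (e 3)) 5 * c (S (e 1)) 6 - 2 * c (A (e 1)) 6 * c (S (e 3)) 5 + 2 * c (A (e 3)) 6 * c (S (e 1)) 5"
    by (simp add: wedge10[OF sig_anti rho_alt1 rho_alt2] st_vals sig_e rho_e psi_def6 e3_def delta_num J_e linear_neg[OF A_lin] c_neg rls) algebra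

  have C11: "c (A (S (e 1))) 1 - c (S (A (e 1))) 1 = 0"
    by (simp only: coordT[OF A_lin, of "S (e 1)"] coordT[OF S_lin, of "A (e 1)"] sum6  rls) algebra
  have C12: "c (A (S (e 2))) 1 - c (S (A (e 2))) 1 = 0"
    by (simp only: coordT[OF A_lin, of "S (e 2)"] coordT[OF S_lin, of "A (e 2)"] sum6  rls) algebra
  have C13: "c (A (S (e 3))) 1 - c (S (A (e 3))) 1 = (1/2) * wedge23 \<sigma> \<rho> (e \<circ> st 5)"
    by (simp only: coordT[OF A_lin, of "S (e 3)"] coordT[OF S_lin, of "A (e 3)"] sum6 W5 rls) algebra
  have C14: "c (A (S (e 4))) 1 - c (S (A (e 4))) 1 = (1/2) * wedge23 \<sigma> \<rho> (e \<circ> st 6)"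
    by (simp only: coordT[OF A_lin, of "S (e 4)"] coordT[OF S_lin, of "A (e 4)"] sum6 W6 rls) algebra
  have C15: "c (A (S (e 5))) 1 - c (S (A (e 5))) 1 = (-1/2) * wedge23 \<sigma> \<rho> (e \<circ> st 3)"
    by (simp only: coordT[OF A_lin, of "S (e 5)"] coordT[OF S_lin, of "A (e 5)"] sum6 W3 rls) algebra
  have C16: "c (A (S (e 6))) 1 - c (S (A (e 6))) 1 = (-1/2) * wedge23 \<sigma> \<rho> (e \<circ> st 4)"
    by (simp only: coordT[OF A_lin, of "S (e 6)"] coordT[OF S_lin, of "A (e 6)"] sum6 W4 rls) algebra
  have C21: "c (A (S (e 1))) 2 - c (S (A (e 1))) 2 = 0"
    by (simp only: coordT[OF A_lin, of "S (e 1)"] coordT[OF S_lin, of "A (e 1)"] sum6  rls) algebra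
  have C22: "c (A (S (e 2))) 2 - c (S (A (e 2))) 2 = 0"
    by (simp only: coordT[OF A_lin, of "S (e 2)"] coordT[OF S_lin, of "A (e 2)"] sum6  rls) algebra
  have C23: "c (A (S (e 3))) 2 - c (S (A (e 3))) 2 = (1/2) * wedge23 \<sigma> \<rho> (e \<circ> st 6)"
    by (simp only: coordT[OF A_lin, of "S (e 3)"] coordT[OF S_lin, of "A (e 3)"] sum6 W6 rls) algebra
  have C24: "c (A (S (e 4))) 2 - c (S (A (e 4))) 2 = (-1/2) * wedge23 \<sigma> \<rho> (e \<circ> st 5)"
    by (simp only: coordT[OF A_lin, of "S (e 4)"] coordT[OF S_lin, of "A (e 4)"] sum6 W5 rls) algebra
  have C25: "c (A (S (e 5))) 2 - c (S (A (e 5))) 2 = (-1/2) * wedge23 \<sigma> \<rho> (e \<circ> st 4)"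
    by (simp only: coordT[OF A_lin, of "S (e 5)"] coordT[OF S_lin, of "A (e 5)"] sum6 W4 rls) algebra
  have C26: "c (A (S (e 6))) 2 - c (S (A (e 6))) 2 = (1/2) * wedge23 \<sigma> \<rho> (e \<circ> st 3)"
    by (simp only: coordT[OF A_lin, of "S (e 6)"] coordT[OF S_lin, of "A (e 6)"] sum6 W3 rls) algebra
  have C31: "c (A (S (e 1))) 3 - c (S (A (e 1))) 3 = (-1/2) * wedge23 \<sigma> \<rho> (e \<circ> st 5)"
    by (simp only: coordT[OF A_lin, of "S (e 1)"] coordT[OF S_lin, of "A (e 1)"] sum6 W5 rls) algebra
  have C32: "c (A (S (e 2))) 3 - c (S (A (e 2))) 3 = (-1/2) * wedge23 \<sigma> \<rho> (e \<circ> st 6)"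
    by (simp only: coordT[OF A_lin, of "S (e 2)"] coordT[OF S_lin, of "A (e 2)"] sum6 W6 rls) algebra
  have C33: "c (A (S (e 3))) 3 - c (S (A (e 3))) 3 = 0"
    by (simp only: coordT[OF A_lin, of "S (e 3)"] coordT[OF S_lin, of "A (e 3)"] sum6  rls) algebra
  have C34: "c (A (S (e 4))) 3 - c (S (A (e 4))) 3 = 0"
    by (simp only: coordT[OF A_lin, of "S (e 4)"] coordT[OF S_lin, of "A (e 4)"] sum6  rls) algebra
  have C35: "c (A (S (e 5))) 3 - c (S (A (e 5))) 3 = (1/2) * wedge23 \<sigma> \<rho> (e \<circ> st 1)"
    by (simp only: coordT[OF A_lin, of "S (e 5)"] coordT[OF S_lin, of "A (e 5)"] sum6 W1 rls) algebra
  have C36: "c (A (S (e 6))) 3 - c (S (A (e 6))) 3 = (1/2) * wedge23 \<sigma> \<rho> (e \<circ> st 2)"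
    by (simp only: coordT[OF A_lin, of "S (e 6)"] coordT[OF S_lin, of "A (e 6)"] sum6 W2 rls) algebra
  have C41: "c (A (S (e 1))) 4 - c (S (A (e 1))) 4 = (-1/2) * wedge23 \<sigma> \<rho> (e \<circ> st 6)"
    by (simp only: coordT[OF A_lin, of "S (e 1)"] coordT[OF S_lin, of "A (e 1)"] sum6 W6 rls) algebra
  have C42: "c (A (S (e 2))) 4 - c (S (A (e 2))) 4 = (1/2) * wedge23 \<sigma> \<rho> (e \<circ> st 5)"
    by (simp only: coordT[OF A_lin, of "S (e 2)"] coordT[OF S_lin, of "A (e 2)"] sum6 W5 rls) algebra
  have C43: "c (A (S (e 3))) 4 - c (S (A (e 3))) 4 = 0"
    by (simp only: coordT[OF A_lin, of "S (e 3)"] coordT[OF S_lin, of "A (e 3)"] sum6  rls) algebra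
  have C44: "c (A (S (e 4))) 4 - c (S (A (e 4))) 4 = 0"
    by (simp only: coordT[OF A_lin, of "S (e 4)"] coordT[OF S_lin, of "A (e 4)"] sum6  rls) algebra
  have C45: "c (A (S (e 5))) 4 - c (S (A (e 5))) 4 = (1/2) * wedge23 \<sigma> \<rho> (e \<circ> st 2)"
    by (simp only: coordT[OF A_lin, of "S (e 5)"] coordT[OF S_lin, of "A (e 5)"] sum6 W2 rls) algebra
  have C46: "c (A (S (e 6))) 4 - c (S (A (e 6))) 4 = (-1/2) * wedge23 \<sigma> \<rho> (e \<circ> st 1)"
    by (simp only: coordT[OF A_lin, of "S (e 6)"] coordT[OF S_lin, of "A (e 6)"] sum6 W1 rls) algebra
  have C51: "c (A (S (e 1))) 5 - c (S (A (e 1))) 5 = (1/2) * wedge23 \<sigma> \<rho> (e \<circ> st 3)"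
    by (simp only: coordT[OF A_lin, of "S (e 1)"] coordT[OF S_lin, of "A (e 1)"] sum6 W3 rls) algebra
  have C52: "c (A (S (e 2))) 5 - c (S (A (e 2))) 5 = (1/2) * wedge23 \<sigma> \<rho> (e \<circ> st 4)"
    by (simp only: coordT[OF A_lin, of "S (e 2)"] coordT[OF S_lin, of "A (e 2)"] sum6 W4 rls) algebra
  have C53: "c (A (S (e 3))) 5 - c (S (A (e 3))) 5 = (-1/2) * wedge23 \<sigma> \<rho> (e \<circ> st 1)"
    by (simp only: coordT[OF A_lin, of "S (e 3)"] coordT[OF S_lin, of "A (e 3)"] sum6 W1 rls) algebra
  have C54: "c (A (S (e 4))) 5 - c (S (A (e 4))) 5 = (-1/2) * wedge23 \<sigma> \<rho> (e \<circ> st 2)"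
    by (simp only: coordT[OF A_lin, of "S (e 4)"] coordT[OF S_lin, of "A (e 4)"] sum6 W2 rls) algebra
  have C55: "c (A (S (e 5))) 5 - c (S (A (e 5))) 5 = 0"
    by (simp only: coordT[OF A_lin, of "S (e 5)"] coordT[OF S_lin, of "A (e 5)"] sum6  rls) algebra
  have C56: "c (A (S (e 6))) 5 - c (S (A (e 6))) 5 = 0"
    by (simp only: coordT[OF A_lin, of "S (e 6)"] coordT[OF S_lin, of "A (e 6)"] sum6  rls) algebra
  have C61: "c (A (S (e 1))) 6 - c (S (A (e 1))) 6 = (1/2) * wedge23 \<sigma> \<rho> (e \<circ> st 4)"
    by (simp only: coordT[OF A_lin, of "S (e 1)"] coordT[OF S_lin, of "A (e 1)"] sum6 W4 rls) algebra
  have C62: "c (A (S (e 2))) 6 - c (S (A (e 2))) 6 = (-1/2) * wedge23 \<sigma> \<rho> (e \<circ> st 3)"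
    by (simp only: coordT[OF A_lin, of "S (e 2)"] coordT[OF S_lin, of "A (e 2)"] sum6 W3 rls) algebra
  have C63: "c (A (S (e 3))) 6 - c (S (A (e 3))) 6 = (-1/2) * wedge23 \<sigma> \<rho> (e \<circ> st 2)"
    by (simp only: coordT[OF A_lin, of "S (e 3)"] coordT[OF S_lin, of "A (e 3)"] sum6 W2 rls) algebra
  have C64: "c (A (S (e 4))) 6 - c (S (A (e 4))) 6 = (1/2) * wedge23 \<sigma> \<rho> (e \<circ> st 1)"
    by (simp only: coordT[OF A_lin, of "S (e 4)"] coordT[OF S_lin, of "A (e 4)"] sum6 W1 rls) algebra
  have C65: "c (A (S (e 5))) 6 - c (S (A (e 5))) 6 = 0"
    by (simp only: coordT[OF A_lin, of "S (e 5)"] coordT[OF S_lin, of "A (e 5)"] sum6  rls) algebra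
  have C66: "c (A (S (e 6))) 6 - c (S (A (e 6))) 6 = 0"
    by (simp only: coordT[OF A_lin, of "S (e 6)"] coordT[OF S_lin, of "A (e 6)"] sum6  rls) algebra  show ?thesis
  proof
    assume h: "\<forall>t\<in>{1..6}. wedge23 \<sigma> \<rho> (e \<circ> st t) = 0"
    have W0: "wedge23 \<sigma> \<rho> (e \<circ> st 1) = 0" "wedge23 \<sigma> \<rho> (e \<circ> st 2) = 0" "wedge23 \<sigma> \<rho> (e \<circ> st 3) = 0" "wedge23 \<sigma> \<rho> (e \<circ> st 4) = 0" "wedge23 \<sigma> \<rho> (e \<circ> st 5) = 0" "wedge23 \<sigma> \<rho> (e \<circ> st 6) = 0"
      using h by (simp_all add: ball6)
    show "\<forall>i\<in>{1..6}. \<forall>j\<in>{1..6}. c (A (S (e j))) i = c (S (A (e j))) i"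
      unfolding ball6 by (intro conjI; rule eq_from_diff; simp only: C11 C12 C13 C14 C15 C16 C21 C22 C23 C24 C25 C26 C31 C32 C33 C34 C35 C36 C41 C42 C43 C44 C45 C46 C51 C52 C53 C54 C55 C56 C61 C62 C63 C64 C65 C66 W0; simp)
  next
    assume h: "\<forall>i\<in>{1..6}. \<forall>j\<in>{1..6}. c (A (S (e j))) i = c (S (A (e j))) i"
    have H: "c (A (S (e 5))) 3 = c (S (A (e 5))) 3" "c (A (S (e 6))) 3 = c (S (A (e 6))) 3" "c (A (S (e 5))) 1 = c (S (A (e 5))) 1" "c (A (S (e 6))) 1 = c (S (A (e 6))) 1" "c (A (S (e 3))) 1 = c (S (A (e 3))) 1" "c (A (S (e 4))) 1 = c (S (A (e 4))) 1"
      using h by (simp_all add: ball6)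
    show "\<forall>t\<in>{1..6}. wedge23 \<sigma> \<rho> (e \<circ> st t) = 0"
      unfolding ball6 using C35 C36 C15 C16 C13 C14 H by simp
  qed
qed


lemma sig_lin1: "linear (\<lambda>x. \<sigma> x y)"
  using linear_compose[OF linear_compose[OF J_lin A_lin] g_lin(1)] by (simp add: sig_def o_def)
lemma sig_lin2: "linear (\<lambda>y. \<sigma> x y)"
  using g_lin(2) by (simp add: sig_def)

lemma rho_lin1: "linear (\<lambda>x. \<rho> x y z)"
proof -
  have 1: "linear (\<lambda>x. \<psi> (S x) y z)" using linear_compose[OF S_lin psi_lin(1)] by (simp add: o_def)
  have "linear (\<lambda>x. - \<psi> (S x) y z - \<psi> x (S y) z - \<psi> x y (S z))"
    by (intro linear_compose_sub linear_compose_neg 1 psi_lin(1))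
  then show ?thesis by (simp add: rho_def)
qed
lemma rho_lin2: "linear (\<lambda>y. \<rho> x y z)"
proof -
  have 1: "linear (\<lambda>y. \<psi> x (S y) z)" using linear_compose[OF S_lin psi_lin(2)] by (simp add: o_def)
  have "linear (\<lambda>y. - \<psi> (S x) y z - \<psi> x (S y) z - \<psi> x y (S z))"
    by (intro linear_compose_sub linear_compose_neg 1 psi_lin(2))
  then show ?thesis by (simp add: rho_def)
qed
lemma rho_lin3: "linear (\<lambda>z. \<rho> x y z)"
proof -
  have 1: "linear (\<lambda>z. \<psi> x y (S z))" using linear_compose[OF S_lin psi_lin(3)] by (simp add: o_def)
  have "linear (\<lambda>z. - \<psi> (S x) y z - \<psi> x (S y) z - \<psi> x y (S z))"
    by (intro linear_compose_sub linear_compose_neg 1 psi_lin(3))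
  then show ?thesis by (simp add: rho_def)
qed

lemma wedge_zero_iff:
  "(\<forall>vs. wedge23 \<sigma> \<rho> vs = 0) \<longleftrightarrow> (\<forall>t\<in>{1..6}. wedge23 \<sigma> \<rho> (e \<circ> st t) = 0)"
proof
  assume "\<forall>vs. wedge23 \<sigma> \<rho> vs = 0"
  then show "\<forall>t\<in>{1..6}. wedge23 \<sigma> \<rho> (e \<circ> st t) = 0" by simp
next
  assume h: "\<forall>t\<in>{1..6}. wedge23 \<sigma> \<rho> (e \<circ> st t) = 0"
  have base: "wedge23 \<sigma> \<rho> (e \<circ> idx) = 0" if "\<And>k. k < 5 \<Longrightarrow> idx k \<in> {1..6}" for idx
    using basis_reduce[of "wedge23 \<sigma> \<rho>", OF wedge_perm wedge_local, of e idx] h that by blast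
  show "\<forall>vs. wedge23 \<sigma> \<rho> vs = 0"
  proof
    fix vs
    show "wedge23 \<sigma> \<rho> vs = 0"
      by (rule multilin_reduce[where W = "wedge23 \<sigma> \<rho>" and e = e and c = c,
            OF wedge_slot_lin[OF sig_lin1 sig_lin2 rho_lin1 rho_lin2 rho_lin3] wedge_local span6 base])
  qed
qed

lemma comm_coords:
  "A \<circ> S = S \<circ> A \<longleftrightarrow> (\<forall>i\<in>{1..6}. \<forall>j\<in>{1..6}. c (A (S (e j))) i = c (S (A (e j))) i)"
proof
  assume "A \<circ> S = S \<circ> A"
  then show "\<forall>i\<in>{1..6}. \<forall>j\<in>{1..6}. c (A (S (e j))) i = c (S (A (e j))) i" by (simp add: fun_eq_iff)
next
  assume h: "\<forall>i\<in>{1..6}. \<forall>j\<in>{1..6}. c (A (S (e j))) i = c (S (A (e j))) i"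
  have AS_lin: "linear (\<lambda>x. A (S x))" using linear_compose[OF S_lin A_lin] by (simp add: o_def)
  have SA_lin: "linear (\<lambda>x. S (A x))" using linear_compose[OF A_lin S_lin] by (simp add: o_def)
  have coef: "c (A (S x)) i = c (S (A x)) i" if i: "i \<in> {1..6}" for x i
  proof -
    have "c (A (S x)) i = (\<Sum>k=1..6. c x k * c (A (S (e k))) i)" using coordT[OF AS_lin, of x i] by simp
    also have "\<dots> = (\<Sum>k=1..6. c x k * c (S (A (e k))) i)" using h i by (intro sum.cong) auto
    also have "\<dots> = c (S (A x)) i" using coordT[OF SA_lin, of x i] by simp
    finally show ?thesis .
  qed
  have "A (S x) = S (A x)" for x
  proof -
    have "A (S x) = (\<Sum>i=1..6. c (A (S x)) i *\<^sub>R e i)" by (rule span6)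
    also have "\<dots> = (\<Sum>i=1..6. c (S (A x)) i *\<^sub>R e i)" using coef by (intro sum.cong) auto
    also have "\<dots> = S (A x)" by (rule span6[symmetric])
    finally show ?thesis .
  qed
  then show "A \<circ> S = S \<circ> A" by (simp add: fun_eq_iff)
qed

lemma eigbasis:
  assumes comm: "A \<circ> S = S \<circ> A"
  shows "\<exists>f :: nat \<Rightarrow> 'v.
           (\<forall>i\<in>{1..6}. \<forall>j\<in>{1..6}. g (f i) (f j) = (if i = j then 1 else 0)) \<and>
           (\<forall>k\<in>{1,2,3}. J (f (2*k - 1)) = f (2*k)) \<and>
           (\<forall>i\<in>{1..6}. \<exists>a b. A (f i) = a *\<^sub>R f i \<and> S (f i) = b *\<^sub>R f i)"
proof -
  define A' where "A' y = tv c (A (uv e y))" for y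
  define S' where "S' y = tv c (S (uv e y))" for y
  define J' where "J' y = tv c (J (uv e y))" for y
  have linA': "linear A'" using linear_compose[OF linear_compose[OF uv_lin A_lin] tv_lin] by (simp add: A'_def[abs_def] o_def)
  have linS': "linear S'" using linear_compose[OF linear_compose[OF uv_lin S_lin] tv_lin] by (simp add: S'_def[abs_def] o_def)
  have linJ': "linear J'" using linear_compose[OF linear_compose[OF uv_lin J_lin] tv_lin] by (simp add: J'_def[abs_def] o_def)
  have saA: "inner (A' x) y = inner x (A' y)" for x y
  proof -
    have "inner (A' x) y = g (A (uv e x)) (uv e y)" by (simp add: A'_def g_tv tv_uv)
    also have "\<dots> = g (uv e x) (A (uv e y))" using A_sym by (simp add: g_symmetric_def)
    also have "\<dots> = inner x (A' y)" by (simp add: A'_def g_tv tv_uv)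
    finally show ?thesis .
  qed
  have saS: "inner (S' x) y = inner x (S' y)" for x y
  proof -
    have "inner (S' x) y = g (S (uv e x)) (uv e y)" by (simp add: S'_def g_tv tv_uv)
    also have "\<dots> = g (uv e x) (S (uv e y))" using S_sym by (simp add: g_symmetric_def)
    also have "\<dots> = inner x (S' y)" by (simp add: S'_def g_tv tv_uv)
    finally show ?thesis .
  qed
  have skJ: "inner (J' x) y = - inner x (J' y)" for x y
  proof -
    have "inner (J' x) y = g (J (uv e x)) (uv e y)" by (simp add: J'_def g_tv tv_uv)
    also have "\<dots> = - g (uv e x) (J (uv e y))" by (rule J_skew)
    also have "\<dots> = - inner x (J' y)" by (simp add: J'_def g_tv tv_uv)
    finally show ?thesis .
  qed
  have JJ': "J' (J' x) = - x" for x
    by (simp add: J'_def uv_tv JJ linear_neg[OF tv_lin] tv_uv)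
  have AJ': "A' (J' x) = J' (A' x)" for x
    by (simp add: A'_def J'_def uv_tv AJx)
  have SJ': "S' (J' x) = - J' (S' x)" for x
    by (simp add: S'_def J'_def uv_tv SJx linear_neg[OF tv_lin])
  have AS': "A' (S' x) = S' (A' x)" for x
    using comm by (simp add: A'_def S'_def uv_tv fun_eq_iff)
  have dim: "DIM(real \<times> real \<times> real \<times> real \<times> real \<times> real) = 6" by simp
  obtain w :: "nat \<Rightarrow> real \<times> real \<times> real \<times> real \<times> real \<times> real" where w1: "\<forall>i\<in>{1..6}. \<forall>j\<in>{1..6}. inner (w i) (w j) = (if i = j then 1 else 0)"
    and w2: "\<forall>k\<in>{1,2,3}. J' (w (2*k - 1)) = w (2*k)"
    and w3: "\<forall>i\<in>{1..6}. \<exists>a b. A' (w i) = a *\<^sub>R w i \<and> S' (w i) = b *\<^sub>R w i"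
    using unitary_eig[OF linA' linS' linJ' saA saS skJ JJ' AJ' SJ' AS' dim] by blast
  define f where "f i = uv e (w i)" for i
  have uvJ: "uv e (J' y) = J (uv e y)" for y by (simp add: J'_def uv_tv)
  have uvA: "uv e (A' y) = A (uv e y)" for y by (simp add: A'_def uv_tv)
  have uvS: "uv e (S' y) = S (uv e y)" for y by (simp add: S'_def uv_tv)
  show ?thesis
  proof (intro exI conjI)
    show "\<forall>i\<in>{1..6}. \<forall>j\<in>{1..6}. g (f i) (f j) = (if i = j then 1 else 0)"
      using w1 by (simp add: f_def g_tv tv_uv)
    show "\<forall>k\<in>{1,2,3}. J (f (2*k - 1)) = f (2*k)"
      using w2 by (metis f_def uvJ)
    show "\<forall>i\<in>{1..6}. \<exists>a b. A (f i) = a *\<^sub>R f i \<and> S (f i) = b *\<^sub>R f i"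
    proof
      fix i assume "i \<in> {1..6::nat}"
      then obtain a b where "A' (w i) = a *\<^sub>R w i" "S' (w i) = b *\<^sub>R w i" using w3 by blast
      then have "A (f i) = a *\<^sub>R f i" "S (f i) = b *\<^sub>R f i"
        using uvA[of "w i"] uvS[of "w i"] linear_cmul[OF uv_lin] by (simp_all add: f_def)
      then show "\<exists>a b. A (f i) = a *\<^sub>R f i \<and> S (f i) = b *\<^sub>R f i" by blast
    qed
  qed
qed


end
end

theorem lemma5p1:
  fixes \<omega> g :: "'v::real_vector \<Rightarrow> 'v \<Rightarrow> real"
    and \<psi> :: "'v \<Rightarrow> 'v \<Rightarrow> 'v \<Rightarrow> real"
    and J A S :: "'v \<Rightarrow> 'v"
    and e :: "nat \<Rightarrow> 'v" and c :: "'v \<Rightarrow> nat \<Rightarrow> real"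
  assumes su3: "su3_frame \<omega> \<psi> J g e c"
    and A_lin: "linear A" and A_sym: "g_symmetric g A"
    and AJ: "A \<circ> J = J \<circ> A" and trA: "trace_in e c A = 0"
    and S_lin: "linear S" and S_sym: "g_symmetric g S"
    and SJ: "S \<circ> J = - (J \<circ> S)"
  defines "\<sigma> \<equiv> \<lambda>x y. g (A (J x)) y"
    and "\<rho> \<equiv> \<lambda>x y z. - \<psi> (S x) y z - \<psi> x (S y) z - \<psi> x y (S z)"
  shows "(A \<circ> S = S \<circ> A \<longleftrightarrow> (\<forall>vs. wedge23 \<sigma> \<rho> vs = 0)) \<and>
         (A \<circ> S = S \<circ> A \<longrightarrow>
            (\<exists>f :: nat \<Rightarrow> 'v.
               (\<forall>i\<in>{1..6}. \<forall>j\<in>{1..6}. g (f i) (f j) = (if i = j then 1 else 0)) \<and>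
               (\<forall>k\<in>{1,2,3}. J (f (2*k - 1)) = f (2*k)) \<and>
               (\<forall>i\<in>{1..6}. \<exists>a b. A (f i) = a *\<^sub>R f i \<and> S (f i) = b *\<^sub>R f i)))"
proof -
  have sig: "\<sigma> = (\<lambda>x y. g (A (J x)) y)" by (simp add: \<sigma>_def)
  have rho: "\<rho> = (\<lambda>x y z. - \<psi> (S x) y z - \<psi> x (S y) z - \<psi> x y (S z))" by (simp add: \<rho>_def)
  note ctx = su3 A_lin A_sym AJ S_lin S_sym SJ sig rho
  have 1: "A \<circ> S = S \<circ> A \<longleftrightarrow> (\<forall>vs. wedge23 \<sigma> \<rho> vs = 0)"
    using comm_coords[OF ctx] key_identities[OF ctx] wedge_zero_iff[OF ctx] by simp
  have 2: "A \<circ> S = S \<circ> A \<longrightarrow>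
            (\<exists>f :: nat \<Rightarrow> 'v.
               (\<forall>i\<in>{1..6}. \<forall>j\<in>{1..6}. g (f i) (f j) = (if i = j then 1 else 0)) \<and>
               (\<forall>k\<in>{1,2,3}. J (f (2*k - 1)) = f (2*k)) \<and>
               (\<forall>i\<in>{1..6}. \<exists>a b. A (f i) = a *\<^sub>R f i \<and> S (f i) = b *\<^sub>R f i))"
    using eigbasis[OF ctx] by blast
  show ?thesis using 1 2 by blast
qed

end
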